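(* Let $G_n=K_n$ be the complete graph on $n$ vertices and let $\lambda_n,\gamma_n>0$ with $\lambda_n\to\infty$, $\gamma_n\to\infty$; let $T_n$ be the end of epidemic time on $K_n$ with walking rate $\lambda_n$ and recovery rate $\gamma_n$. Then: (i) if $\lambda_n/(n\gamma_n)\to\infty$, then $\frac{n\gamma_n^2}{\lambda_n}T_n\xrightarrow{D}\mathrm{Exp}(1)$; (ii) if $\lambda_n/\gamma_n\to 0$, then $2\lambda_nT_n\xrightarrow{D}\mathrm{Exp}(1)$; (iii) if $\lambda_n/\gamma_n\to\infty$ and $\lambda_n/(n\gamma_n)\to 0$, then $\gamma_nT_n\xrightarrow{D}X+Y$, where $X\sim\mathrm{Exp}(1)$ and $Y\sim\mathrm{Exp}(2)$ are independent.
   Context: Model on a finite connected undirected graph $G$: two agents perform independent continuous-time simple random walks, each holding at a vertex for an $\mathrm{Exp}(\lambda)$ time and then jumping to a uniformly chosen neighbour. Each agent is susceptible ($S$) or infected ($I$); whenever they occupy the same vertex and at least one is infected, both become infected immediately; each infected agent independently recovers after an $\mathrm{Exp}(\gamma)$ time. Initially both are infected at the same vertex. The end of epidemic time is $T=\inf\{t\ge0:\text{both agents are in } S\}$. $\mathrm{Exp}(\mu)$ denotes the exponential distribution with rate $\mu$. *)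

theory Defs
  imports "HOL-Probability.Probability"
begin

text \<open>State of the two-agent system: (position of agent 1, position of agent 2,
  agent 1 infected?, agent 2 infected?).  True means infected (I), False susceptible (S).\<close>
type_synonym state = "nat \<times> nat \<times> bool \<times> bool"

definition states :: "nat set \<Rightarrow> state set" where
  "states V = V \<times> V \<times> (UNIV :: bool set) \<times> (UNIV :: bool set)"

definition move1 :: "state \<Rightarrow> nat \<Rightarrow> state" where
  "move1 x w = (case x of (u, v, a, b) \<Rightarrow>
     (if w = v \<and> (a \<or> b) then (w, v, True, True) else (w, v, a, b)))"

definition move2 :: "state \<Rightarrow> nat \<Rightarrow> state" where
  "move2 x w = (case x of (u, v, a, b) \<Rightarrow>
     (if u = w \<and> (a \<or> b) then (u, w, True, True) else (u, w, a, b)))"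

definition rec1 :: "state \<Rightarrow> state" where
  "rec1 x = (case x of (u, v, a, b) \<Rightarrow>
     (if u = v \<and> b then (u, v, True, b) else (u, v, False, b)))"

definition rec2 :: "state \<Rightarrow> state" where
  "rec2 x = (case x of (u, v, a, b) \<Rightarrow>
     (if u = v \<and> a then (u, v, a, True) else (u, v, a, False)))"

definition rate_to :: "(nat \<Rightarrow> nat set) \<Rightarrow> real \<Rightarrow> real \<Rightarrow> state \<Rightarrow> state \<Rightarrow> real" where
  "rate_to nbr lam gam x y = (case x of (u, v, a, b) \<Rightarrow>
      (\<Sum>w\<in>nbr u. lam / real (card (nbr u)) * of_bool (y = move1 x w))
    + (\<Sum>w\<in>nbr v. lam / real (card (nbr v)) * of_bool (y = move2 x w))
    + (if a then gam * of_bool (y = rec1 x) else 0)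
    + (if b then gam * of_bool (y = rec2 x) else 0))"

definition generator :: "nat set \<Rightarrow> (nat \<Rightarrow> nat set) \<Rightarrow> real \<Rightarrow> real \<Rightarrow> state \<Rightarrow> state \<Rightarrow> real" where
  "generator V nbr lam gam x y =
     rate_to nbr lam gam x y - (if x = y then (\<Sum>z\<in>states V. rate_to nbr lam gam x z) else 0)"

fun mpow :: "'s set \<Rightarrow> ('s \<Rightarrow> 's \<Rightarrow> real) \<Rightarrow> nat \<Rightarrow> 's \<Rightarrow> 's \<Rightarrow> real" where
  "mpow S Q 0 x y = of_bool (x = y)"
| "mpow S Q (Suc k) x y = (\<Sum>z\<in>S. Q x z * mpow S Q k z y)"

definition trans_prob :: "nat set \<Rightarrow> (nat \<Rightarrow> nat set) \<Rightarrow> real \<Rightarrow> real \<Rightarrow> real \<Rightarrow> state \<Rightarrow> state \<Rightarrow> real" where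
  "trans_prob V nbr lam gam t x y =
     (\<Sum>k. t ^ k / fact k * mpow (states V) (generator V nbr lam gam) k x y)"

definition both_susceptible :: "state \<Rightarrow> bool" where
  "both_susceptible x = (case x of (u, v, a, b) \<Rightarrow> \<not> a \<and> \<not> b)"

text \<open>Distribution function t \<mapsto> P(T \<le> t) of the end of epidemic time T started from x0.
  Since the set of states with both agents susceptible is absorbing,
  P(T \<le> t) = P(X_t has both agents susceptible).\<close>
definition end_time_cdf :: "nat set \<Rightarrow> (nat \<Rightarrow> nat set) \<Rightarrow> real \<Rightarrow> real \<Rightarrow> state \<Rightarrow> real \<Rightarrow> real" where
  "end_time_cdf V nbr lam gam x0 t =
     (if t < 0 then 0 else
        (\<Sum>y\<in>{y\<in>states V. both_susceptible y}. trans_prob V nbr lam gam t x0 y))"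

definition Kn_nbr :: "nat \<Rightarrow> nat \<Rightarrow> nat set" where
  "Kn_nbr n u = {..<n} - {u}"

end

theory Submission
  imports Defs
begin

lemma cdf_exp1:
  "cdf (density lborel (exponential_density 1)) t = (if t < 0 then 0 else 1 - exp (- t))"
proof -
  have "emeasure (density lborel (exponential_density 1)) {..t} = erlang_CDF 0 1 t"
    by (rule emeasure_erlang_density) simp
  then show ?thesis
    unfolding cdf_def measure_def by (simp add: erlang_CDF_def)
qed

lemma cdf_conv12:
  "cdf (density lborel (exponential_density 1) \<star> density lborel (exponential_density 2)) t
     = (if t < 0 then 0 else 1 - 2 * exp (- t) + exp (- 2 * t))"
proof -
  let ?M = "density lborel (exponential_density 1)"
  let ?N = "density lborel (exponential_density 2)"
  have fM: "finite_measure ?M" using prob_space_exponential_density[of 1]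
    by (simp add: prob_space_def)
  have fN: "finite_measure ?N" using prob_space_exponential_density[of 2]
    by (simp add: prob_space_def)
  have "emeasure (?M \<star> ?N) {..t} = \<integral>\<^sup>+x. (emeasure ?N {a. a + x \<in> {..t}}) \<partial>?M"
    by (rule convolution_emeasure) (use fM fN in auto)
  also have "\<dots> = \<integral>\<^sup>+x. ennreal (erlang_CDF 0 2 (t - x)) \<partial>?M"
  proof (intro nn_integral_cong)
    fix x
    have "{a. a + x \<in> {..t}} = {..t-x}" by auto
    then show "emeasure ?N {a. a + x \<in> {..t}} = ennreal (erlang_CDF 0 2 (t - x))"
      by (simp add: emeasure_erlang_density)
  qed
  also have "\<dots> = \<integral>\<^sup>+x. ennreal (exponential_density 1 x) * ennreal (erlang_CDF 0 2 (t - x)) \<partial>lborel"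
  proof -
    have [measurable]: "(\<lambda>x. erlang_CDF 0 2 (t - x)) \<in> borel_measurable borel"
      unfolding erlang_CDF_def by measurable
    show ?thesis by (subst nn_integral_density) (auto simp: exponential_density_def)
  qed
  finally have eq: "emeasure (?M \<star> ?N) {..t} = \<integral>\<^sup>+x. ennreal (exponential_density 1 x) * ennreal (erlang_CDF 0 2 (t - x)) \<partial>lborel" .
  show ?thesis
  proof (cases "t < 0")
    case True
    have "(\<integral>\<^sup>+x. ennreal (exponential_density 1 x) * ennreal (erlang_CDF 0 2 (t - x)) \<partial>lborel) = \<integral>\<^sup>+x. 0 \<partial>(lborel::real measure)"
      by (intro nn_integral_cong) (use True in \<open>auto simp: exponential_density_def erlang_CDF_def\<close>)
    with eq True show ?thesis unfolding cdf_def measure_def by simp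
  next
    case False
    let ?f = "\<lambda>x. exp (- x) - exp (- 2 * t) * exp x"
    let ?F = "\<lambda>x. - exp (- x) - exp (- 2 * t) * exp x"
    have "(\<integral>\<^sup>+x. ennreal (exponential_density 1 x) * ennreal (erlang_CDF 0 2 (t - x)) \<partial>lborel)
        = (\<integral>\<^sup>+x. ennreal (?f x) * indicator {0..t} x \<partial>lborel)"
    proof (intro nn_integral_cong)
      fix x :: real
      show "ennreal (exponential_density 1 x) * ennreal (erlang_CDF 0 2 (t - x)) = ennreal (?f x) * indicator {0..t} x"
      proof (cases "0 \<le> x \<and> x \<le> t")
        case True
        have "exp (- x) * (1 - exp (- (2 * (t - x)))) = ?f x"
          by (simp add: algebra_simps flip: exp_add)
        with True show ?thesis
          by (simp add: exponential_density_def erlang_CDF_def ennreal_mult[symmetric])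
      qed (auto simp: exponential_density_def erlang_CDF_def)
    qed
    also have "\<dots> = ?F t - ?F 0"
    proof (rule nn_integral_FTC_Icc)
      show "?f \<in> borel_measurable borel" by measurable
      fix x assume x: "x \<in> {0..t}"
      show "DERIV ?F x :> ?f x"
        by (auto intro!: derivative_eq_intros)
      have "exp (- 2 * t) * exp x \<le> exp (- x)"
        using x by (simp flip: exp_add)
      then show "0 \<le> ?f x" by simp
    qed (use False in simp)
    finally have E0: "emeasure (?M \<star> ?N) {..t} = ennreal (?F t - ?F 0)" using eq by simp
    have E1: "?F t - ?F 0 = 1 - 2 * exp (- t) + exp (- 2 * t)"
      by (simp add: algebra_simps flip: exp_add)
    have nn: "0 \<le> 1 - 2 * exp (- t) + exp (- 2 * t)"
    proof -
      have "1 - 2 * exp (- t) + exp (- 2 * t) = (1 - exp (- t))^2"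
        by (simp add: power2_eq_square algebra_simps flip: exp_add)
      then show ?thesis by simp
    qed
    have "measure (?M \<star> ?N) {..t} = 1 - 2 * exp (- t) + exp (- 2 * t)"
      unfolding measure_def E0 E1 using nn by simp
    then show ?thesis unfolding cdf_def using False by simp
  qed
qed

lemma sum_ofbool_eq:
  fixes f :: "'a \<Rightarrow> real"
  assumes "finite S" "y \<in> S"
  shows "(\<Sum>z\<in>S. c * of_bool (z = y) * f z) = c * f y"
proof -
  have "(\<Sum>z\<in>S. c * of_bool (z = y) * f z) = (\<Sum>z\<in>S. if z = y then c * f z else 0)"
    by (intro sum.cong) auto
  also have "\<dots> = c * f y" using assms by (simp add: sum.delta')
  finally show ?thesis .
qed

lemma sum_rate_part:
  fixes f :: "state \<Rightarrow> real" and m :: "nat \<Rightarrow> state"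
  assumes "finite S" "finite W" "\<And>w. w \<in> W \<Longrightarrow> m w \<in> S"
  shows "(\<Sum>z\<in>S. (\<Sum>w\<in>W. c * of_bool (z = m w)) * f z) = (\<Sum>w\<in>W. c * f (m w))"
proof -
  have "(\<Sum>z\<in>S. (\<Sum>w\<in>W. c * of_bool (z = m w)) * f z) = (\<Sum>z\<in>S. \<Sum>w\<in>W. c * of_bool (z = m w) * f z)"
    by (simp add: sum_distrib_right)
  also have "\<dots> = (\<Sum>w\<in>W. \<Sum>z\<in>S. c * of_bool (z = m w) * f z)"
    by (rule sum.swap)
  also have "\<dots> = (\<Sum>w\<in>W. c * f (m w))"
    by (intro sum.cong refl sum_ofbool_eq) (use assms in auto)
  finally show ?thesis .
qed

lemma sum_rate_if:
  fixes f :: "state \<Rightarrow> real"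
  assumes "finite S" "y \<in> S"
  shows "(\<Sum>z\<in>S. (if p then c * of_bool (z = y) else 0) * f z) = (if p then c * f y else 0)"
  using sum_ofbool_eq[OF assms, of c f] by auto

lemma finite_states: "finite V \<Longrightarrow> finite (states V)"
  by (simp add: states_def)

lemma gen_sum:
  fixes f :: "state \<Rightarrow> real"
  assumes fin: "finite V" and nb: "\<And>u. u \<in> V \<Longrightarrow> nbr u \<subseteq> V \<and> finite (nbr u)"
    and x: "x = (u, v, p, q)" "u \<in> V" "v \<in> V"
  shows "(\<Sum>z\<in>states V. generator V nbr lam gam x z * f z) =
      (\<Sum>w\<in>nbr u. lam / real (card (nbr u)) * (f (move1 x w) - f x))
    + (\<Sum>w\<in>nbr v. lam / real (card (nbr v)) * (f (move2 x w) - f x))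
    + (if p then gam * (f (rec1 x) - f x) else 0)
    + (if q then gam * (f (rec2 x) - f x) else 0)"
proof -
  let ?S = "states V"
  have finS: "finite ?S" using fin by (simp add: finite_states)
  have xS: "x \<in> ?S" using x by (simp add: states_def)
  have m1: "\<And>w. w \<in> nbr u \<Longrightarrow> move1 x w \<in> ?S"
    using nb x by (auto simp: move1_def states_def)
  have m2: "\<And>w. w \<in> nbr v \<Longrightarrow> move2 x w \<in> ?S"
    using nb x by (auto simp: move2_def states_def)
  have r1: "rec1 x \<in> ?S" using x by (auto simp: rec1_def states_def)
  have r2: "rec2 x \<in> ?S" using x by (auto simp: rec2_def states_def)
  have fu: "finite (nbr u)" "finite (nbr v)" using nb x by auto
  have RT: "\<And>g. (\<Sum>z\<in>?S. rate_to nbr lam gam x z * g z) =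
      (\<Sum>w\<in>nbr u. lam / real (card (nbr u)) * g (move1 x w))
    + (\<Sum>w\<in>nbr v. lam / real (card (nbr v)) * g (move2 x w))
    + (if p then gam * g (rec1 x) else 0)
    + (if q then gam * g (rec2 x) else 0)"
  proof -
    fix g :: "state \<Rightarrow> real"
    have "(\<Sum>z\<in>?S. rate_to nbr lam gam x z * g z) =
        (\<Sum>z\<in>?S. (\<Sum>w\<in>nbr u. lam / real (card (nbr u)) * of_bool (z = move1 x w)) * g z)
      + (\<Sum>z\<in>?S. (\<Sum>w\<in>nbr v. lam / real (card (nbr v)) * of_bool (z = move2 x w)) * g z)
      + (\<Sum>z\<in>?S. (if p then gam * of_bool (z = rec1 x) else 0) * g z)
      + (\<Sum>z\<in>?S. (if q then gam * of_bool (z = rec2 x) else 0) * g z)"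
      unfolding rate_to_def x by (simp add: sum.distrib algebra_simps eq_commute[of _ "move1 _ _"]
          eq_commute[of _ "move2 _ _"] eq_commute[of _ "rec1 _"] eq_commute[of _ "rec2 _"])
    also have "\<dots> = (\<Sum>w\<in>nbr u. lam / real (card (nbr u)) * g (move1 x w))
    + (\<Sum>w\<in>nbr v. lam / real (card (nbr v)) * g (move2 x w))
    + (if p then gam * g (rec1 x) else 0)
    + (if q then gam * g (rec2 x) else 0)"
    proof -
      have A: "(\<Sum>z\<in>?S. (\<Sum>w\<in>nbr u. lam / real (card (nbr u)) * of_bool (z = move1 x w)) * g z) = (\<Sum>w\<in>nbr u. lam / real (card (nbr u)) * g (move1 x w))"
        by (rule sum_rate_part[OF finS fu(1)]) (rule m1)
      have B: "(\<Sum>z\<in>?S. (\<Sum>w\<in>nbr v. lam / real (card (nbr v)) * of_bool (z = move2 x w)) * g z) = (\<Sum>w\<in>nbr v. lam / real (card (nbr v)) * g (move2 x w))"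
        by (rule sum_rate_part[OF finS fu(2)]) (rule m2)
      show ?thesis
        by (simp only: A B sum_rate_if[OF finS r1] sum_rate_if[OF finS r2])
    qed
    finally show "?thesis g" .
  qed
  have "(\<Sum>z\<in>?S. generator V nbr lam gam x z * f z) =
     (\<Sum>z\<in>?S. rate_to nbr lam gam x z * f z) - (\<Sum>z\<in>?S. rate_to nbr lam gam x z) * f x"
  proof -
    have "(\<Sum>z\<in>?S. generator V nbr lam gam x z * f z) =
       (\<Sum>z\<in>?S. rate_to nbr lam gam x z * f z - (if x = z then (\<Sum>z\<in>?S. rate_to nbr lam gam x z) * f x else 0))"
      unfolding generator_def by (intro sum.cong) (auto simp: algebra_simps)
    also have "\<dots> = (\<Sum>z\<in>?S. rate_to nbr lam gam x z * f z) - (\<Sum>z\<in>?S. rate_to nbr lam gam x z) * f x"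
      using xS finS by (simp add: sum_subtractf sum.delta)
    finally show ?thesis .
  qed
  also have "(\<Sum>z\<in>?S. rate_to nbr lam gam x z) = (\<Sum>z\<in>?S. rate_to nbr lam gam x z * (\<lambda>_. 1) z)" by simp
  finally have E: "(\<Sum>z\<in>?S. generator V nbr lam gam x z * f z) =
     (\<Sum>z\<in>?S. rate_to nbr lam gam x z * f z) - (\<Sum>z\<in>?S. rate_to nbr lam gam x z * (\<lambda>_. 1) z) * f x" .
  have s1: "\<And>c. (\<Sum>w\<in>nbr u. c * (f (move1 x w) - f x)) = (\<Sum>w\<in>nbr u. c * f (move1 x w)) - (\<Sum>w\<in>nbr u. c * (\<lambda>_. 1) (move1 x w)) * f x"
    by (simp add: sum_subtractf right_diff_distrib sum_distrib_right)
  have s2: "\<And>c. (\<Sum>w\<in>nbr v. c * (f (move2 x w) - f x)) = (\<Sum>w\<in>nbr v. c * f (move2 x w)) - (\<Sum>w\<in>nbr v. c * (\<lambda>_. 1) (move2 x w)) * f x"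
    by (simp add: sum_subtractf right_diff_distrib sum_distrib_right)
  show ?thesis
    unfolding E RT[of f] RT[of "\<lambda>_. 1"] s1 s2
    by (cases p; cases q; simp only: if_True if_False right_diff_distrib distrib_right mult_zero_left add_0_right add_0_left; linarith)
qed

definition coef :: "real \<Rightarrow> real \<Rightarrow> real \<Rightarrow> real" where
  "coef r s t = s * t / ((s - r) * (t - r))"

definition Wf :: "real \<Rightarrow> real \<Rightarrow> real \<Rightarrow> (real \<Rightarrow> real) \<Rightarrow> nat \<Rightarrow> real" where
  "Wf r1 r2 r3 d k = of_bool (k = 0) - (coef r1 r2 r3 * d r1 * (- r1) ^ k
      + coef r2 r1 r3 * d r2 * (- r2) ^ k + coef r3 r1 r2 * d r3 * (- r3) ^ k)"

definition dD2 :: "real \<Rightarrow> real \<Rightarrow> real" where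
  "dD2 a r = (a - r) / a"

definition dD1 :: "real \<Rightarrow> real \<Rightarrow> real \<Rightarrow> real \<Rightarrow> real" where
  "dD1 a b g r = ((b + 2 * g - r) * (a - r) - a * b) / (2 * g * a)"

definition pc :: "real \<Rightarrow> real \<Rightarrow> real \<Rightarrow> real \<Rightarrow> real" where
  "pc a b g x = (x - a) * (x - b - 2 * g) * (x - b - g) - a * b * (x - b - 3 * g)"

lemma lag:
  assumes "r1 \<noteq> r2" "r1 \<noteq> r3" "r2 \<noteq> r3"
  shows "coef r1 r2 r3 + coef r2 r1 r3 + coef r3 r1 r2 = 1"
    "coef r1 r2 r3 * r1 + coef r2 r1 r3 * r2 + coef r3 r1 r2 * r3 = 0"
    "coef r1 r2 r3 * r1^2 + coef r2 r1 r3 * r2^2 + coef r3 r1 r2 * r3^2 = 0"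
proof -
  define D where "D = (r2 - r1) * (r3 - r1) * (r3 - r2)"
  have nz: "(r2 - r1) * (r3 - r1) \<noteq> 0" "(r1 - r2) * (r3 - r2) \<noteq> 0" "(r1 - r3) * (r2 - r3) \<noteq> 0" "D \<noteq> 0"
    using assms by (auto simp: D_def)
  have c1: "coef r1 r2 r3 = r2 * r3 * (r3 - r2) / D"
    unfolding coef_def using nz by (subst frac_eq_eq) (auto simp: D_def algebra_simps)
  have c2: "coef r2 r1 r3 = - (r1 * r3 * (r3 - r1)) / D"
    unfolding coef_def using nz by (subst frac_eq_eq) (auto simp: D_def algebra_simps)
  have c3: "coef r3 r1 r2 = r1 * r2 * (r2 - r1) / D"
    unfolding coef_def using nz by (subst frac_eq_eq) (auto simp: D_def algebra_simps)
  show "coef r1 r2 r3 + coef r2 r1 r3 + coef r3 r1 r2 = 1"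
    unfolding c1 c2 c3 using nz(4) by (simp add: field_simps; simp add: D_def algebra_simps)
  show "coef r1 r2 r3 * r1 + coef r2 r1 r3 * r2 + coef r3 r1 r2 * r3 = 0"
    unfolding c1 c2 c3 using nz(4) by (simp add: field_simps; simp add: D_def algebra_simps)
  show "coef r1 r2 r3 * r1^2 + coef r2 r1 r3 * r2^2 + coef r3 r1 r2 * r3^2 = 0"
    unfolding c1 c2 c3 using nz(4) by (simp add: field_simps; simp add: D_def algebra_simps power2_eq_square)
qed

lemma lag_quad:
  assumes "r1 \<noteq> r2" "r1 \<noteq> r3" "r2 \<noteq> r3"
    and d: "\<And>r. d r = \<alpha> + \<beta> * r + \<gamma> * r^2"
  shows "coef r1 r2 r3 * d r1 + coef r2 r1 r3 * d r2 + coef r3 r1 r2 * d r3 = \<alpha>"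
proof -
  let ?c1 = "coef r1 r2 r3" and ?c2 = "coef r2 r1 r3" and ?c3 = "coef r3 r1 r2"
  have "?c1 * d r1 + ?c2 * d r2 + ?c3 * d r3 =
     \<alpha> * (?c1 + ?c2 + ?c3) + \<beta> * (?c1 * r1 + ?c2 * r2 + ?c3 * r3) + \<gamma> * (?c1 * r1^2 + ?c2 * r2^2 + ?c3 * r3^2)"
    unfolding d by (simp add: algebra_simps)
  also have "\<dots> = \<alpha>" using lag[OF assms(1-3)] by simp
  finally show ?thesis .
qed

context
  fixes r1 r2 r3 a b g :: real
  assumes dist: "r1 \<noteq> r2" "r1 \<noteq> r3" "r2 \<noteq> r3" and anz: "a \<noteq> 0" and gnz: "g \<noteq> 0"
begin

lemma Wf0:
  "Wf r1 r2 r3 (\<lambda>_. 1) 0 = 0" "Wf r1 r2 r3 (dD2 a) 0 = 0" "Wf r1 r2 r3 (dD1 a b g) 0 = 0"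
proof -
  show "Wf r1 r2 r3 (\<lambda>_. 1) 0 = 0"
    unfolding Wf_def using lag_quad[OF dist, of "\<lambda>_. 1" 1 0 0] by simp
  show "Wf r1 r2 r3 (dD2 a) 0 = 0"
    unfolding Wf_def using lag_quad[OF dist, of "dD2 a" 1 "-1/a" 0] anz
    by (simp add: dD2_def field_simps)
  have "\<And>r. dD1 a b g r = 1 + (- (a + b + 2*g) / (2*g*a)) * r + (1 / (2*g*a)) * r^2"
    unfolding dD1_def using anz gnz by (simp add: field_simps power2_eq_square)
  then have "coef r1 r2 r3 * dD1 a b g r1 + coef r2 r1 r3 * dD1 a b g r2 + coef r3 r1 r2 * dD1 a b g r3 = 1"
    by (rule lag_quad[OF dist])
  then show "Wf r1 r2 r3 (dD1 a b g) 0 = 0"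
    unfolding Wf_def by simp
qed

lemma WfC_step: "Wf r1 r2 r3 (\<lambda>_. 1) (Suc k) = a * (Wf r1 r2 r3 (dD2 a) k - Wf r1 r2 r3 (\<lambda>_. 1) k)"
  unfolding Wf_def dD2_def using anz by (simp add: field_simps)

lemma WfD2_step: "Wf r1 r2 r3 (dD2 a) (Suc k) =
   b * (Wf r1 r2 r3 (\<lambda>_. 1) k - Wf r1 r2 r3 (dD2 a) k) + 2 * g * (Wf r1 r2 r3 (dD1 a b g) k - Wf r1 r2 r3 (dD2 a) k)"
  unfolding Wf_def dD2_def dD1_def using anz gnz by (simp add: field_simps)

lemma dD1_root: "pc a b g r = 0 \<Longrightarrow> (b + g - r) * dD1 a b g r = b"
  unfolding dD1_def pc_def using anz gnz by (simp add: field_simps)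

lemma WfD1_step:
  assumes "pc a b g r1 = 0" "pc a b g r2 = 0" "pc a b g r3 = 0"
  shows "Wf r1 r2 r3 (dD1 a b g) (Suc k) =
   b * (Wf r1 r2 r3 (\<lambda>_. 1) k - Wf r1 r2 r3 (dD1 a b g) k) + g * (of_bool (k = 0) - Wf r1 r2 r3 (dD1 a b g) k)"
proof -
  define y1 where "y1 = dD1 a b g r1"
  define y2 where "y2 = dD1 a b g r2"
  define y3 where "y3 = dD1 a b g r3"
  have h: "(b + g - r1) * y1 = b" "(b + g - r2) * y2 = b" "(b + g - r3) * y3 = b"
    using dD1_root assms unfolding y1_def y2_def y3_def by auto
  let ?c1 = "coef r1 r2 r3" and ?c2 = "coef r2 r1 r3" and ?c3 = "coef r3 r1 r2"
  have "Wf r1 r2 r3 (dD1 a b g) (Suc k) -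
   (b * (Wf r1 r2 r3 (\<lambda>_. 1) k - Wf r1 r2 r3 (dD1 a b g) k) + g * (of_bool (k = 0) - Wf r1 r2 r3 (dD1 a b g) k))
   = ?c1 * (- r1) ^ k * (b - (b + g - r1) * y1) + ?c2 * (- r2) ^ k * (b - (b + g - r2) * y2)
     + ?c3 * (- r3) ^ k * (b - (b + g - r3) * y3)"
    unfolding Wf_def y1_def[symmetric] y2_def[symmetric] y3_def[symmetric]
    by (simp add: algebra_simps)
  also have "\<dots> = 0" using h by simp
  finally show ?thesis by simp
qed

end

definition Phi :: "real \<Rightarrow> real \<Rightarrow> real \<Rightarrow> real \<Rightarrow> real \<Rightarrow> real \<Rightarrow> nat \<Rightarrow> state \<Rightarrow> real" where
  "Phi a b g r1 r2 r3 k x = (case x of (u, v, p, q) \<Rightarrow>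
     if \<not> p \<and> \<not> q then of_bool (k = 0)
     else if u = v then Wf r1 r2 r3 (\<lambda>_. 1) k
     else if p \<and> q then Wf r1 r2 r3 (dD2 a) k
     else Wf r1 r2 r3 (dD1 a b g) k)"

definition okst :: "state \<Rightarrow> bool" where
  "okst x = (case x of (u, v, p, q) \<Rightarrow> (u = v \<longrightarrow> p = q))"

lemma Kn_card: "u < n \<Longrightarrow> card (Kn_nbr n u) = n - 1"
  unfolding Kn_nbr_def by simp

lemma Kn_fin: "finite (Kn_nbr n u)" unfolding Kn_nbr_def by simp

lemma Kn_sub: "Kn_nbr n u \<subseteq> {..<n}" unfolding Kn_nbr_def by auto

lemma sumK_delta:
  assumes "v \<in> Kn_nbr n u"
  shows "(\<Sum>w\<in>Kn_nbr n u. c * (if w = v then A else 0)) = c * (A::real)"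
proof -
  have "(\<Sum>w\<in>Kn_nbr n u. c * (if w = v then A else 0)) = (\<Sum>w\<in>Kn_nbr n u. if w = v then c * A else 0)"
    by (intro sum.cong) auto
  also have "\<dots> = c * A" using assms Kn_fin by (simp add: sum.delta')
  finally show ?thesis .
qed

lemma sumK_const:
  assumes "u < n"
  shows "(\<Sum>w\<in>Kn_nbr n u. c * (A::real)) = real (n - 1) * c * A"
  using assms by (simp add: Kn_card)

lemma gen_sum_Kn:
  fixes f :: "state \<Rightarrow> real"
  assumes x: "x = (u, v, p, q)" "u < n" "v < n"
  shows "(\<Sum>z\<in>states {..<n}. generator {..<n} (Kn_nbr n) lam gam x z * f z) =
      (\<Sum>w\<in>Kn_nbr n u. lam / real (n - 1) * (f (move1 x w) - f x))
    + (\<Sum>w\<in>Kn_nbr n v. lam / real (n - 1) * (f (move2 x w) - f x))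
    + (if p then gam * (f (rec1 x) - f x) else 0)
    + (if q then gam * (f (rec2 x) - f x) else 0)"
  using gen_sum[of "{..<n}" "Kn_nbr n" x u v p q lam gam f] x Kn_fin Kn_sub
  by (simp add: Kn_card)

lemma twice_helper: "lam / d * A + lam / d * A + B = 2 * lam / d * A + (B::real)"
proof -
  have "2 * lam / d * A = lam / d * A + lam / d * A"
    by (simp only: mult_2 add_divide_distrib distrib_right)
  then show ?thesis by (simp only:)
qed
lemma twice_helper2: "lam / d * A + lam / d * A + gam * C + gam * C = 2 * lam / d * A + 2 * gam * (C::real)"
proof -
  have "2 * lam / d * A = lam / d * A + lam / d * A"
    by (simp only: mult_2 add_divide_distrib distrib_right)
  moreover have "2 * gam * C = gam * C + gam * C" by (simp only: mult_2 distrib_right)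
  ultimately show ?thesis by (simp only: add.assoc)
qed

context
  fixes r1 r2 r3 lam gam :: real and n :: nat
  assumes dist: "r1 \<noteq> r2" "r1 \<noteq> r3" "r2 \<noteq> r3" and lpos: "lam > 0" and gpos: "gam > 0"
    and n2: "n \<ge> 2"
    and roots: "pc (2*lam) (2*lam/real (n-1)) gam r1 = 0" "pc (2*lam) (2*lam/real (n-1)) gam r2 = 0"
       "pc (2*lam) (2*lam/real (n-1)) gam r3 = 0"
begin

abbreviation "PP \<equiv> Phi (2*lam) (2*lam/real (n-1)) gam r1 r2 r3"
abbreviation "WC \<equiv> Wf r1 r2 r3 (\<lambda>_. 1)"
abbreviation "WD2 \<equiv> Wf r1 r2 r3 (dD2 (2*lam))"
abbreviation "WD1 \<equiv> Wf r1 r2 r3 (dD1 (2*lam) (2*lam/real (n-1)) gam)"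

lemma Phi_step:
  assumes x: "x = (u, v, p, q)" "u < n" "v < n" and ok: "okst x"
  shows "(\<Sum>z\<in>states {..<n}. generator {..<n} (Kn_nbr n) lam gam x z * PP k z) = PP (Suc k) x"
proof -
  let ?c = "lam / real (n - 1)"
  have anz: "2 * lam \<noteq> 0" using lpos by simp
  have gnz: "gam \<noteq> 0" using gpos by simp
  have n1: "real (n - 1) > 0" using n2 by simp
  note G = gen_sum_Kn[OF x, of lam gam "PP k"]
  consider (E) "\<not> p \<and> \<not> q" | (C) "u = v" "p" "q" | (D2) "u \<noteq> v" "p" "q"
     | (D1a) "u \<noteq> v" "p" "\<not> q" | (D1b) "u \<noteq> v" "\<not> p" "q"
    using ok x by (auto simp: okst_def)
  then show ?thesis
  proof cases
    case E
    have "\<And>w. PP k (move1 x w) - PP k x = 0" "\<And>w. PP k (move2 x w) - PP k x = 0"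
      using E x by (auto simp: Phi_def move1_def move2_def)
    then show ?thesis using G E x by (simp add: Phi_def)
  next
    case C
    have "\<And>w. w \<in> Kn_nbr n u \<Longrightarrow> PP k (move1 x w) - PP k x = WD2 k - WC k"
      using C x by (auto simp: Phi_def move1_def Kn_nbr_def)
    then have s1: "(\<Sum>w\<in>Kn_nbr n u. ?c * (PP k (move1 x w) - PP k x)) = lam * (WD2 k - WC k)"
      using sumK_const[OF x(2), of ?c "WD2 k - WC k"] n1 by simp
    have "\<And>w. w \<in> Kn_nbr n v \<Longrightarrow> PP k (move2 x w) - PP k x = WD2 k - WC k"
      using C x by (auto simp: Phi_def move2_def Kn_nbr_def)
    then have s2: "(\<Sum>w\<in>Kn_nbr n v. ?c * (PP k (move2 x w) - PP k x)) = lam * (WD2 k - WC k)"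
      using sumK_const[OF x(3), of ?c "WD2 k - WC k"] n1 by simp
    have r: "rec1 x = x" "rec2 x = x" using C x by (auto simp: rec1_def rec2_def)
    have "PP (Suc k) x = WC (Suc k)" using C x by (simp add: Phi_def)
    also have "\<dots> = 2 * lam * (WD2 k - WC k)" by (rule WfC_step[OF dist anz gnz])
    finally show ?thesis using G s1 s2 r by simp
  next
    case D2
    have vin: "v \<in> Kn_nbr n u" "u \<in> Kn_nbr n v" using D2 x by (auto simp: Kn_nbr_def)
    have "\<And>w. w \<in> Kn_nbr n u \<Longrightarrow> ?c * (PP k (move1 x w) - PP k x) = ?c * (if w = v then WC k - WD2 k else 0)"
      using D2 x by (auto simp: Phi_def move1_def Kn_nbr_def)
    then have s1: "(\<Sum>w\<in>Kn_nbr n u. ?c * (PP k (move1 x w) - PP k x)) = ?c * (WC k - WD2 k)"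
      using sumK_delta[OF vin(1)] by (metis (no_types, lifting) sum.cong)
    have "\<And>w. w \<in> Kn_nbr n v \<Longrightarrow> ?c * (PP k (move2 x w) - PP k x) = ?c * (if w = u then WC k - WD2 k else 0)"
      using D2 x by (auto simp: Phi_def move2_def Kn_nbr_def)
    then have s2: "(\<Sum>w\<in>Kn_nbr n v. ?c * (PP k (move2 x w) - PP k x)) = ?c * (WC k - WD2 k)"
      using sumK_delta[OF vin(2)] by (metis (no_types, lifting) sum.cong)
    have r: "PP k (rec1 x) = WD1 k" "PP k (rec2 x) = WD1 k" "PP k x = WD2 k"
      using D2 x by (auto simp: rec1_def rec2_def Phi_def)
    have "PP (Suc k) x = WD2 (Suc k)" using D2 x by (simp add: Phi_def)
    also have "\<dots> = 2*lam/real (n-1) * (WC k - WD2 k) + 2 * gam * (WD1 k - WD2 k)"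
      by (rule WfD2_step[OF dist anz gnz])
    finally have e1: "PP (Suc k) x = 2*lam/real (n-1) * (WC k - WD2 k) + 2 * gam * (WD1 k - WD2 k)" .
    have e2: "(\<Sum>z\<in>states {..<n}. generator {..<n} (Kn_nbr n) lam gam x z * PP k z) =
       ?c * (WC k - WD2 k) + ?c * (WC k - WD2 k) + gam * (WD1 k - WD2 k) + gam * (WD1 k - WD2 k)"
      using G s1 s2 r D2 by simp
    show ?thesis unfolding e1 e2 by (rule twice_helper2)
  next
    case D1a
    have vin: "v \<in> Kn_nbr n u" "u \<in> Kn_nbr n v" using D1a x by (auto simp: Kn_nbr_def)
    have "\<And>w. w \<in> Kn_nbr n u \<Longrightarrow> ?c * (PP k (move1 x w) - PP k x) = ?c * (if w = v then WC k - WD1 k else 0)"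
      using D1a x by (auto simp: Phi_def move1_def Kn_nbr_def)
    then have s1: "(\<Sum>w\<in>Kn_nbr n u. ?c * (PP k (move1 x w) - PP k x)) = ?c * (WC k - WD1 k)"
      using sumK_delta[OF vin(1)] by (metis (no_types, lifting) sum.cong)
    have "\<And>w. w \<in> Kn_nbr n v \<Longrightarrow> ?c * (PP k (move2 x w) - PP k x) = ?c * (if w = u then WC k - WD1 k else 0)"
      using D1a x by (auto simp: Phi_def move2_def Kn_nbr_def)
    then have s2: "(\<Sum>w\<in>Kn_nbr n v. ?c * (PP k (move2 x w) - PP k x)) = ?c * (WC k - WD1 k)"
      using sumK_delta[OF vin(2)] by (metis (no_types, lifting) sum.cong)
    have r: "PP k (rec1 x) = of_bool (k = 0)" "PP k x = WD1 k"
      using D1a x by (auto simp: rec1_def Phi_def)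
    have "PP (Suc k) x = WD1 (Suc k)" using D1a x by (simp add: Phi_def)
    also have "\<dots> = 2*lam/real (n-1) * (WC k - WD1 k) + gam * (of_bool (k = 0) - WD1 k)"
      by (rule WfD1_step[OF dist anz gnz roots])
    finally have e1: "PP (Suc k) x = 2*lam/real (n-1) * (WC k - WD1 k) + gam * (of_bool (k = 0) - WD1 k)" .
    have e2: "(\<Sum>z\<in>states {..<n}. generator {..<n} (Kn_nbr n) lam gam x z * PP k z) =
       ?c * (WC k - WD1 k) + ?c * (WC k - WD1 k) + gam * (of_bool (k = 0) - WD1 k)"
      unfolding G s1 s2 using r D1a by simp
    show ?thesis unfolding e1 e2 by (rule twice_helper)
  next
    case D1b
    have vin: "v \<in> Kn_nbr n u" "u \<in> Kn_nbr n v" using D1b x by (auto simp: Kn_nbr_def)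
    have "\<And>w. w \<in> Kn_nbr n u \<Longrightarrow> ?c * (PP k (move1 x w) - PP k x) = ?c * (if w = v then WC k - WD1 k else 0)"
      using D1b x by (auto simp: Phi_def move1_def Kn_nbr_def)
    then have s1: "(\<Sum>w\<in>Kn_nbr n u. ?c * (PP k (move1 x w) - PP k x)) = ?c * (WC k - WD1 k)"
      using sumK_delta[OF vin(1)] by (metis (no_types, lifting) sum.cong)
    have "\<And>w. w \<in> Kn_nbr n v \<Longrightarrow> ?c * (PP k (move2 x w) - PP k x) = ?c * (if w = u then WC k - WD1 k else 0)"
      using D1b x by (auto simp: Phi_def move2_def Kn_nbr_def)
    then have s2: "(\<Sum>w\<in>Kn_nbr n v. ?c * (PP k (move2 x w) - PP k x)) = ?c * (WC k - WD1 k)"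
      using sumK_delta[OF vin(2)] by (metis (no_types, lifting) sum.cong)
    have r: "PP k (rec2 x) = of_bool (k = 0)" "PP k x = WD1 k"
      using D1b x by (auto simp: rec2_def Phi_def)
    have "PP (Suc k) x = WD1 (Suc k)" using D1b x by (simp add: Phi_def)
    also have "\<dots> = 2*lam/real (n-1) * (WC k - WD1 k) + gam * (of_bool (k = 0) - WD1 k)"
      by (rule WfD1_step[OF dist anz gnz roots])
    finally have e1: "PP (Suc k) x = 2*lam/real (n-1) * (WC k - WD1 k) + gam * (of_bool (k = 0) - WD1 k)" .
    have e2: "(\<Sum>z\<in>states {..<n}. generator {..<n} (Kn_nbr n) lam gam x z * PP k z) =
       ?c * (WC k - WD1 k) + ?c * (WC k - WD1 k) + gam * (of_bool (k = 0) - WD1 k)"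
      unfolding G s1 s2 using r D1b by simp
    show ?thesis unfolding e1 e2 by (rule twice_helper)
  qed
qed

end

lemma exp_sums_real: "(\<lambda>n. x ^ n / fact n) sums exp (x::real)"
  using exp_converges[of x] by (simp add: field_simps)

lemma mpow_bound:
  assumes fin: "finite S" and M: "\<And>x z. x \<in> S \<Longrightarrow> z \<in> S \<Longrightarrow> \<bar>Q x z\<bar> \<le> M" and M0: "0 \<le> M"
  shows "x \<in> S \<Longrightarrow> \<bar>mpow S Q k x y\<bar> \<le> (real (card S) * M) ^ k"
proof (induction k arbitrary: x)
  case 0
  then show ?case by simp
next
  case (Suc k)
  have "\<bar>mpow S Q (Suc k) x y\<bar> \<le> (\<Sum>z\<in>S. \<bar>Q x z * mpow S Q k z y\<bar>)"
    by (simp add: sum_abs)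
  also have "\<dots> \<le> (\<Sum>z\<in>S. M * (real (card S) * M) ^ k)"
  proof (intro sum_mono)
    fix z assume z: "z \<in> S"
    have "\<bar>Q x z * mpow S Q k z y\<bar> = \<bar>Q x z\<bar> * \<bar>mpow S Q k z y\<bar>" by (simp add: abs_mult)
    also have "\<dots> \<le> M * (real (card S) * M) ^ k"
      by (intro mult_mono M Suc z) (auto simp: M0)
    finally show "\<bar>Q x z * mpow S Q k z y\<bar> \<le> M * (real (card S) * M) ^ k" .
  qed
  also have "\<dots> = (real (card S) * M) ^ Suc k" by simp
  finally show ?case .
qed

lemma mpow_summable:
  assumes fin: "finite S" and x: "x \<in> S"
  shows "summable (\<lambda>k. t ^ k / fact k * mpow S Q k x y)"
proof -
  define M where "M = (\<Sum>x\<in>S. \<Sum>z\<in>S. \<bar>Q x z\<bar>)"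
  have M: "\<And>x z. x \<in> S \<Longrightarrow> z \<in> S \<Longrightarrow> \<bar>Q x z\<bar> \<le> M"
  proof -
    fix x z assume "x \<in> S" "z \<in> S"
    have "\<bar>Q x z\<bar> \<le> (\<Sum>z\<in>S. \<bar>Q x z\<bar>)"
      using \<open>z \<in> S\<close> fin by (intro member_le_sum) auto
    also have "\<dots> \<le> M" unfolding M_def
      using \<open>x \<in> S\<close> fin by (intro member_le_sum[where f = "\<lambda>x. \<Sum>z\<in>S. \<bar>Q x z\<bar>"]) (auto intro: sum_nonneg)
    finally show "\<bar>Q x z\<bar> \<le> M" .
  qed
  have M0: "0 \<le> M" unfolding M_def by (intro sum_nonneg) auto
  define B where "B = real (card S) * M"
  have "summable (\<lambda>k. (\<bar>t\<bar> * B) ^ k / fact k)"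
    using exp_sums_real[of "\<bar>t\<bar> * B"] by (rule sums_summable)
  then show ?thesis
  proof (rule summable_comparison_test')
    fix k
    have "norm (t ^ k / fact k * mpow S Q k x y) = \<bar>t\<bar> ^ k / fact k * \<bar>mpow S Q k x y\<bar>"
      by (simp add: abs_mult power_abs)
    also have "\<dots> \<le> \<bar>t\<bar> ^ k / fact k * B ^ k"
      using mpow_bound[OF fin M M0 x, where k=k and y=y] unfolding B_def
      by (intro mult_left_mono) auto
    also have "\<dots> = (\<bar>t\<bar> * B) ^ k / fact k" by (simp add: power_mult_distrib)
    finally show "norm (t ^ k / fact k * mpow S Q k x y) \<le> (\<bar>t\<bar> * B) ^ k / fact k" .
  qed
qed

lemma move1_ok: "x \<in> states V \<Longrightarrow> w \<in> V \<Longrightarrow> move1 x w \<in> states V \<and> okst (move1 x w)"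
  by (auto simp: move1_def okst_def states_def split: prod.splits)
lemma move2_ok: "x \<in> states V \<Longrightarrow> w \<in> V \<Longrightarrow> move2 x w \<in> states V \<and> okst (move2 x w)"
  by (auto simp: move2_def okst_def states_def split: prod.splits)
lemma rec1_ok: "x \<in> states V \<Longrightarrow> rec1 x \<in> states V \<and> okst (rec1 x)"
  by (auto simp: rec1_def okst_def states_def split: prod.splits)
lemma rec2_ok: "x \<in> states V \<Longrightarrow> rec2 x \<in> states V \<and> okst (rec2 x)"
  by (auto simp: rec2_def okst_def states_def split: prod.splits)

context
  fixes r1 r2 r3 lam gam :: real and n :: nat
  assumes dist: "r1 \<noteq> r2" "r1 \<noteq> r3" "r2 \<noteq> r3" and lpos: "lam > 0" and gpos: "gam > 0"
    and n2: "n \<ge> 2"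
    and roots: "pc (2*lam) (2*lam/real (n-1)) gam r1 = 0" "pc (2*lam) (2*lam/real (n-1)) gam r2 = 0"
       "pc (2*lam) (2*lam/real (n-1)) gam r3 = 0"
begin

abbreviation "SS \<equiv> states {..<n}"
abbreviation "QQ \<equiv> generator {..<n} (Kn_nbr n) lam gam"
abbreviation "EE \<equiv> {y \<in> states {..<n}. both_susceptible y}"

lemma G_closed:
  "x \<in> SS \<Longrightarrow> okst x \<Longrightarrow> (\<Sum>y\<in>EE. mpow SS QQ k x y) = PP r1 r2 r3 lam gam n k x"
proof (induction k arbitrary: x)
  case 0
  obtain u v p q where x: "x = (u, v, p, q)" by (cases x) auto
  have fE: "finite EE" by (simp add: states_def)
  have "(\<Sum>y\<in>EE. mpow SS QQ 0 x y) = (\<Sum>y\<in>EE. if y = x then 1 else 0)"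
    by (intro sum.cong) auto
  also have "\<dots> = of_bool (x \<in> EE)" using fE by (simp add: sum.delta)
  finally show ?case
    using 0 Wf0(1)[OF dist, where a="2*lam" and g=gam] Wf0(2)[OF dist, where a="2*lam" and g=gam] Wf0(3)[OF dist, where a="2*lam" and g=gam and b="2*lam/real (n-1)"] lpos gpos x
    by (auto simp: Phi_def both_susceptible_def)
next
  case (Suc k)
  obtain u v p q where x: "x = (u, v, p, q)" by (cases x) auto
  have uv: "u < n" "v < n" using Suc.prems x by (auto simp: states_def)
  define Gk where "Gk = (\<lambda>z. \<Sum>y\<in>EE. mpow SS QQ k z y)"
  have "(\<Sum>y\<in>EE. mpow SS QQ (Suc k) x y) = (\<Sum>y\<in>EE. \<Sum>z\<in>SS. QQ x z * mpow SS QQ k z y)"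
    by simp
  also have "\<dots> = (\<Sum>z\<in>SS. \<Sum>y\<in>EE. QQ x z * mpow SS QQ k z y)"
    by (rule sum.swap)
  also have "\<dots> = (\<Sum>z\<in>SS. QQ x z * Gk z)"
    unfolding Gk_def by (simp add: sum_distrib_left)
  also have "\<dots> = (\<Sum>w\<in>Kn_nbr n u. lam / real (n - 1) * (Gk (move1 x w) - Gk x))
    + (\<Sum>w\<in>Kn_nbr n v. lam / real (n - 1) * (Gk (move2 x w) - Gk x))
    + (if p then gam * (Gk (rec1 x) - Gk x) else 0)
    + (if q then gam * (Gk (rec2 x) - Gk x) else 0)"
    by (rule gen_sum_Kn[OF x uv])
  also have "\<dots> = (\<Sum>w\<in>Kn_nbr n u. lam / real (n - 1) * (PP r1 r2 r3 lam gam n k (move1 x w) - PP r1 r2 r3 lam gam n k x))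
    + (\<Sum>w\<in>Kn_nbr n v. lam / real (n - 1) * (PP r1 r2 r3 lam gam n k (move2 x w) - PP r1 r2 r3 lam gam n k x))
    + (if p then gam * (PP r1 r2 r3 lam gam n k (rec1 x) - PP r1 r2 r3 lam gam n k x) else 0)
    + (if q then gam * (PP r1 r2 r3 lam gam n k (rec2 x) - PP r1 r2 r3 lam gam n k x) else 0)"
  proof -
    have gx: "Gk x = PP r1 r2 r3 lam gam n k x" unfolding Gk_def by (rule Suc.IH[OF Suc.prems])
    have g1: "\<And>w. w \<in> Kn_nbr n u \<Longrightarrow> Gk (move1 x w) = PP r1 r2 r3 lam gam n k (move1 x w)"
      unfolding Gk_def using move1_ok[OF Suc.prems(1)] Kn_sub by (intro Suc.IH) auto
    have g2: "\<And>w. w \<in> Kn_nbr n v \<Longrightarrow> Gk (move2 x w) = PP r1 r2 r3 lam gam n k (move2 x w)"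
      unfolding Gk_def using move2_ok[OF Suc.prems(1)] Kn_sub by (intro Suc.IH) auto
    have g3: "Gk (rec1 x) = PP r1 r2 r3 lam gam n k (rec1 x)" "Gk (rec2 x) = PP r1 r2 r3 lam gam n k (rec2 x)"
      unfolding Gk_def using rec1_ok[OF Suc.prems(1)] rec2_ok[OF Suc.prems(1)] Suc.IH by auto
    show ?thesis using g1 g2 g3 gx by (simp cong: sum.cong)
  qed
  also have "\<dots> = (\<Sum>z\<in>SS. QQ x z * PP r1 r2 r3 lam gam n k z)"
    by (rule gen_sum_Kn[OF x uv, symmetric])
  also have "\<dots> = PP r1 r2 r3 lam gam n (Suc k) x"
    by (rule Phi_step[OF dist lpos gpos n2 roots x uv]) (use Suc.prems in simp)
  finally show ?case .
qed

end

lemma exp_term_sums: "(\<lambda>k. t ^ k / fact k * (c * (- r) ^ k)) sums (c * exp (- r * (t::real)))"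
proof -
  have "(\<lambda>k. c * ((- r * t) ^ k / fact k)) sums (c * exp (- r * t))"
    by (intro sums_mult exp_sums_real)
  moreover have "(\<lambda>k. t ^ k / fact k * (c * (- r) ^ k)) = (\<lambda>k. c * ((- r * t) ^ k / fact k))"
  proof
    fix k
    have "(- r * t) ^ k = (- r) ^ k * t ^ k" by (rule power_mult_distrib)
    then show "t ^ k / fact k * (c * (- r) ^ k) = c * ((- r * t) ^ k / fact k)" by simp
  qed
  ultimately show ?thesis by simp
qed

lemma delta_sums: "(\<lambda>k. t ^ k / fact k * of_bool (k = 0)) sums (1::real)"
proof -
  have "(\<lambda>k. if k = 0 then (1::real) else 0) sums 1" using sums_single[of 0 "\<lambda>_. 1::real"] by simp
  moreover have "(\<lambda>k. t ^ k / fact k * of_bool (k = 0)) = (\<lambda>k. if k = 0 then (1::real) else 0)"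
    by auto
  ultimately show ?thesis by simp
qed

lemma cdf_closed:
  fixes r1 r2 r3 lam gam t :: real and n v0 :: nat
  assumes dist: "r1 \<noteq> r2" "r1 \<noteq> r3" "r2 \<noteq> r3" and lpos: "lam > 0" and gpos: "gam > 0"
    and n2: "n \<ge> 2"
    and roots: "pc (2*lam) (2*lam/real (n-1)) gam r1 = 0" "pc (2*lam) (2*lam/real (n-1)) gam r2 = 0"
       "pc (2*lam) (2*lam/real (n-1)) gam r3 = 0"
    and v0: "v0 < n" and t: "0 \<le> t"
  shows "end_time_cdf {..<n} (Kn_nbr n) lam gam (v0, v0, True, True) t =
     1 - (coef r1 r2 r3 * exp (- r1 * t) + coef r2 r1 r3 * exp (- r2 * t) + coef r3 r1 r2 * exp (- r3 * t))"
proof -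
  let ?S = "states {..<n}" and ?Q = "generator {..<n} (Kn_nbr n) lam gam"
  let ?E = "{y \<in> states {..<n}. both_susceptible y}"
  let ?x = "(v0, v0, True, True)"
  have xS: "?x \<in> ?S" using v0 by (simp add: states_def)
  have fS: "finite ?S" by (simp add: states_def)
  have "end_time_cdf {..<n} (Kn_nbr n) lam gam ?x t = (\<Sum>y\<in>?E. \<Sum>k. t ^ k / fact k * mpow ?S ?Q k ?x y)"
    using t unfolding end_time_cdf_def trans_prob_def by simp
  also have "\<dots> = (\<Sum>k. \<Sum>y\<in>?E. t ^ k / fact k * mpow ?S ?Q k ?x y)"
    by (rule suminf_sum[symmetric]) (rule mpow_summable[OF fS xS])
  also have "\<dots> = (\<Sum>k. t ^ k / fact k * Wf r1 r2 r3 (\<lambda>_. 1) k)"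
  proof (intro suminf_cong)
    fix k
    have "(\<Sum>y\<in>?E. t ^ k / fact k * mpow ?S ?Q k ?x y) = t ^ k / fact k * (\<Sum>y\<in>?E. mpow ?S ?Q k ?x y)"
      by (simp add: sum_distrib_left)
    also have "(\<Sum>y\<in>?E. mpow ?S ?Q k ?x y) = Phi (2*lam) (2*lam/real (n-1)) gam r1 r2 r3 k ?x"
      by (rule G_closed[OF dist lpos gpos n2 roots xS]) (simp add: okst_def)
    also have "\<dots> = Wf r1 r2 r3 (\<lambda>_. 1) k" by (simp add: Phi_def)
    finally show "(\<Sum>y\<in>?E. t ^ k / fact k * mpow ?S ?Q k ?x y) = t ^ k / fact k * Wf r1 r2 r3 (\<lambda>_. 1) k" .
  qed
  also have "\<dots> = 1 - (coef r1 r2 r3 * exp (- r1 * t) + coef r2 r1 r3 * exp (- r2 * t) + coef r3 r1 r2 * exp (- r3 * t))"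
  proof (rule sums_unique[symmetric])
    have "(\<lambda>k. t ^ k / fact k * of_bool (k = 0) - (t ^ k / fact k * (coef r1 r2 r3 * (- r1) ^ k)
        + t ^ k / fact k * (coef r2 r1 r3 * (- r2) ^ k) + t ^ k / fact k * (coef r3 r1 r2 * (- r3) ^ k)))
       sums (1 - (coef r1 r2 r3 * exp (- r1 * t) + coef r2 r1 r3 * exp (- r2 * t) + coef r3 r1 r2 * exp (- r3 * t)))"
      by (intro sums_diff sums_add delta_sums exp_term_sums)
    then show "(\<lambda>k. t ^ k / fact k * Wf r1 r2 r3 (\<lambda>_. 1) k) sums
      (1 - (coef r1 r2 r3 * exp (- r1 * t) + coef r2 r1 r3 * exp (- r2 * t) + coef r3 r1 r2 * exp (- r3 * t)))"
      unfolding Wf_def by (simp add: algebra_simps)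
  qed
  finally show ?thesis .
qed

lemma cubic_roots:
  fixes A B C r1 r2 r3 y :: real
  assumes d: "r1 \<noteq> r2" "r1 \<noteq> r3" "r2 \<noteq> r3"
    and f: "\<And>x. f x = x^3 + A * x^2 + B * x + C"
    and z: "f r1 = 0" "f r2 = 0" "f r3 = 0"
  shows "f y = (y - r1) * (y - r2) * (y - r3)"
proof -
  have e12: "(r1 - r2) * (r1^2 + r1*r2 + r2^2 + A * (r1 + r2) + B) = 0"
    using z f by (simp add: algebra_simps power2_eq_square power3_eq_cube; smt (verit))
  have e13: "(r1 - r3) * (r1^2 + r1*r3 + r3^2 + A * (r1 + r3) + B) = 0"
    using z f by (simp add: algebra_simps power2_eq_square power3_eq_cube; smt (verit))
  have h12: "r1^2 + r1*r2 + r2^2 + A * (r1 + r2) + B = 0" using e12 d by simp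
  have h13: "r1^2 + r1*r3 + r3^2 + A * (r1 + r3) + B = 0" using e13 d by simp
  have "(r2 - r3) * (r1 + r2 + r3 + A) = 0"
    using h12 h13 by (simp add: algebra_simps power2_eq_square; smt (verit))
  then have hA: "A = - (r1 + r2 + r3)" using d by simp
  have hB: "B = r1*r2 + r1*r3 + r2*r3"
    using h12 hA by (simp add: algebra_simps power2_eq_square; smt (verit))
  have hC: "C = - (r1 * r2 * r3)"
    using z(1) f hA hB by (simp add: algebra_simps power2_eq_square power3_eq_cube; smt (verit))
  show ?thesis unfolding f hA hB hC by (simp add: algebra_simps power2_eq_square power3_eq_cube)
qed

lemma pc_expand: "pc a b g x = x^3 + (- (a + 2*b + 3*g)) * x^2 + ((b+g)*(b+2*g) + a*(b+3*g)) * x + (- (2*a*g^2))"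
  unfolding pc_def by (simp add: algebra_simps power2_eq_square power3_eq_cube)

lemma pc_roots_only:
  assumes "r1 \<noteq> r2" "r1 \<noteq> r3" "r2 \<noteq> r3" "pc a b g r1 = 0" "pc a b g r2 = 0" "pc a b g r3 = 0"
    and "pc a b g y = 0"
  shows "y = r1 \<or> y = r2 \<or> y = r3"
proof -
  have "pc a b g y = (y - r1) * (y - r2) * (y - r3)"
    by (rule cubic_roots[OF assms(1-3) pc_expand assms(4-6)])
  then show ?thesis using assms(7) by simp
qed

lemma ivt_strict:
  fixes f :: "real \<Rightarrow> real"
  assumes "lo \<le> hi" "\<And>x. isCont f x" "f lo * f hi < 0"
  shows "\<exists>y. lo < y \<and> y < hi \<and> f y = 0"
proof -
  have "\<exists>y\<ge>lo. y \<le> hi \<and> f y = 0"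
  proof (cases "f lo < 0")
    case True
    then have "f hi > 0" using assms(3) by (auto simp: mult_less_0_iff)
    then show ?thesis using True assms(1,2) by (intro IVT) auto
  next
    case False
    then have "f hi < 0" "f lo > 0" using assms(3) by (auto simp: mult_less_0_iff)
    then show ?thesis using assms(1,2) by (intro IVT2) auto
  qed
  then obtain y where y: "lo \<le> y" "y \<le> hi" "f y = 0" by auto
  have "y \<noteq> lo" "y \<noteq> hi" using y assms(3) by auto
  then have "lo < y" "y < hi" using y by auto
  then show ?thesis using y(3) by blast
qed

lemma root_near:
  fixes a b g s k :: "nat \<Rightarrow> real" and L :: "real \<Rightarrow> real"
  assumes lim: "\<And>y. ((\<lambda>n. pc (a n) (b n) (g n) (s n * y) / k n) \<longlongrightarrow> L y) sequentially"
    and kpos: "eventually (\<lambda>n. k n > 0) sequentially"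
    and spos: "eventually (\<lambda>n. s n > 0) sequentially"
    and eps: "0 < \<epsilon>" and sgn: "L (1 - \<epsilon>) * L (1 + \<epsilon>) < 0"
  shows "eventually (\<lambda>n. \<exists>x. \<bar>x - s n\<bar> < \<epsilon> * s n \<and> pc (a n) (b n) (g n) x = 0) sequentially"
proof -
  let ?P = "\<lambda>n y. pc (a n) (b n) (g n) (s n * y) / k n"
  have "((\<lambda>n. ?P n (1 - \<epsilon>) * ?P n (1 + \<epsilon>)) \<longlongrightarrow> L (1 - \<epsilon>) * L (1 + \<epsilon>)) sequentially"
    by (intro tendsto_mult lim)
  then have ev: "eventually (\<lambda>n. ?P n (1 - \<epsilon>) * ?P n (1 + \<epsilon>) < 0) sequentially"
    using sgn by (rule order_tendstoD)
  show ?thesis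
    using ev kpos spos
  proof eventually_elim
    case (elim n)
    have cont: "\<And>x. isCont (?P n) x" unfolding pc_def by (intro continuous_intros) (use elim in auto)
    obtain y where y: "1 - \<epsilon> < y" "y < 1 + \<epsilon>" "?P n y = 0"
      using ivt_strict[of "1 - \<epsilon>" "1 + \<epsilon>" "?P n", OF _ cont elim(1)] eps by auto
    have "pc (a n) (b n) (g n) (s n * y) = 0" using y(3) elim(2) by simp
    moreover have "\<bar>s n * y - s n\<bar> < \<epsilon> * s n"
    proof -
      have "s n * y - s n = s n * (y - 1)" by (simp add: algebra_simps)
      then have "\<bar>s n * y - s n\<bar> = s n * \<bar>y - 1\<bar>" using elim(3) by (simp add: abs_mult)
      also have "\<dots> < s n * \<epsilon>" using y elim(3) by (intro mult_strict_left_mono) auto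
      finally show ?thesis by (simp add: mult.commute)
    qed
    ultimately show ?case by blast
  qed
qed

lemma canon_roots:
  fixes a b g s1 s2 s3 :: "nat \<Rightarrow> real"
  assumes sp: "eventually (\<lambda>n. 0 < s1 n \<and> 2 * s1 n \<le> s2 n \<and> 2 * s2 n \<le> s3 n) sequentially"
    and h1: "\<And>\<epsilon>. 0 < \<epsilon> \<Longrightarrow> \<epsilon> \<le> 1/4 \<Longrightarrow> eventually (\<lambda>n. \<exists>x. \<bar>x - s1 n\<bar> < \<epsilon> * s1 n \<and> pc (a n) (b n) (g n) x = 0) sequentially"
    and h2: "\<And>\<epsilon>. 0 < \<epsilon> \<Longrightarrow> \<epsilon> \<le> 1/4 \<Longrightarrow> eventually (\<lambda>n. \<exists>x. \<bar>x - s2 n\<bar> < \<epsilon> * s2 n \<and> pc (a n) (b n) (g n) x = 0) sequentially"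
    and h3: "\<And>\<epsilon>. 0 < \<epsilon> \<Longrightarrow> \<epsilon> \<le> 1/4 \<Longrightarrow> eventually (\<lambda>n. \<exists>x. \<bar>x - s3 n\<bar> < \<epsilon> * s3 n \<and> pc (a n) (b n) (g n) x = 0) sequentially"
  shows "\<exists>r1 r2 r3. eventually (\<lambda>n. r1 n \<noteq> r2 n \<and> r1 n \<noteq> r3 n \<and> r2 n \<noteq> r3 n
      \<and> pc (a n) (b n) (g n) (r1 n) = 0 \<and> pc (a n) (b n) (g n) (r2 n) = 0 \<and> pc (a n) (b n) (g n) (r3 n) = 0
      \<and> 0 < r1 n \<and> 0 < r2 n \<and> 0 < r3 n) sequentially
    \<and> (\<lambda>n. r1 n / s1 n) \<longlonglongrightarrow> 1 \<and> (\<lambda>n. r2 n / s2 n) \<longlonglongrightarrow> 1 \<and> (\<lambda>n. r3 n / s3 n) \<longlonglongrightarrow> 1"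
proof -
  let ?p = "\<lambda>n. pc (a n) (b n) (g n)"
  define r1 where "r1 n = (SOME x. \<bar>x - s1 n\<bar> < 1/4 * s1 n \<and> ?p n x = 0)" for n
  define r2 where "r2 n = (SOME x. \<bar>x - s2 n\<bar> < 1/4 * s2 n \<and> ?p n x = 0)" for n
  define r3 where "r3 n = (SOME x. \<bar>x - s3 n\<bar> < 1/4 * s3 n \<and> ?p n x = 0)" for n
  define good where "good n \<longleftrightarrow> 0 < s1 n \<and> 2 * s1 n \<le> s2 n \<and> 2 * s2 n \<le> s3 n
     \<and> \<bar>r1 n - s1 n\<bar> < 1/4 * s1 n \<and> ?p n (r1 n) = 0
     \<and> \<bar>r2 n - s2 n\<bar> < 1/4 * s2 n \<and> ?p n (r2 n) = 0
     \<and> \<bar>r3 n - s3 n\<bar> < 1/4 * s3 n \<and> ?p n (r3 n) = 0" for n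
  have q1: "eventually (\<lambda>n. \<exists>x. \<bar>x - s1 n\<bar> < 1/4 * s1 n \<and> ?p n x = 0) sequentially" by (rule h1) auto
  have q2: "eventually (\<lambda>n. \<exists>x. \<bar>x - s2 n\<bar> < 1/4 * s2 n \<and> ?p n x = 0) sequentially" by (rule h2) auto
  have q3: "eventually (\<lambda>n. \<exists>x. \<bar>x - s3 n\<bar> < 1/4 * s3 n \<and> ?p n x = 0) sequentially" by (rule h3) auto
  have G: "eventually good sequentially"
    using sp q1 q2 q3
  proof eventually_elim
    case (elim n)
    show ?case unfolding good_def r1_def r2_def r3_def
      using elim someI_ex[OF elim(2)] someI_ex[OF elim(3)] someI_ex[OF elim(4)] by auto
  qed
  have ord: "good n \<Longrightarrow> r1 n < 5/8 * s2 n \<and> 3/4 * s2 n < r2 n \<and> r2 n < 5/8 * s3 n \<and> 3/4 * s3 n < r3 n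
     \<and> 3/4 * s1 n < r1 n \<and> r1 n < 5/4 * s1 n \<and> r2 n < 5/4 * s2 n \<and> 0 < s1 n" for n
    unfolding good_def by (elim conjE, intro conjI; arith)
  have ev: "eventually (\<lambda>n. r1 n \<noteq> r2 n \<and> r1 n \<noteq> r3 n \<and> r2 n \<noteq> r3 n
      \<and> ?p n (r1 n) = 0 \<and> ?p n (r2 n) = 0 \<and> ?p n (r3 n) = 0
      \<and> 0 < r1 n \<and> 0 < r2 n \<and> 0 < r3 n) sequentially"
    using G
  proof eventually_elim
    case (elim n)
    then show ?case using ord[OF elim] unfolding good_def by auto
  qed
  have uniq: "good n \<Longrightarrow> ?p n y = 0 \<Longrightarrow> y = r1 n \<or> y = r2 n \<or> y = r3 n" for n y
    using ord[of n] unfolding good_def by (intro pc_roots_only[of "r1 n" "r2 n" "r3 n"]) auto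
  have conv: "(\<lambda>n. r n / s n) \<longlonglongrightarrow> 1"
    if hs: "\<And>\<epsilon>. 0 < \<epsilon> \<Longrightarrow> \<epsilon> \<le> 1/4 \<Longrightarrow> eventually (\<lambda>n. \<exists>x. \<bar>x - s n\<bar> < \<epsilon> * s n \<and> ?p n x = 0) sequentially"
      and pick: "\<And>n y. good n \<Longrightarrow> ?p n y = 0 \<Longrightarrow> \<bar>y - s n\<bar> < 1/4 * s n \<Longrightarrow> y = r n"
      and sposr: "\<And>n. good n \<Longrightarrow> 0 < s n"
    for r s :: "nat \<Rightarrow> real"
  proof (rule tendstoI)
    fix e :: real assume e: "0 < e"
    define \<epsilon> where "\<epsilon> = min e (1/4)"
    have \<epsilon>: "0 < \<epsilon>" "\<epsilon> \<le> 1/4" "\<epsilon> \<le> e" using e by (auto simp: \<epsilon>_def)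
    show "eventually (\<lambda>n. dist (r n / s n) 1 < e) sequentially"
      using hs[OF \<epsilon>(1,2)] G
    proof eventually_elim
      case (elim n)
      then obtain y where y: "\<bar>y - s n\<bar> < \<epsilon> * s n" "?p n y = 0" by auto
      have sp: "0 < s n" using sposr[OF elim(2)] .
      have "\<bar>y - s n\<bar> < 1/4 * s n" using y(1) \<epsilon>(2) sp
        by (smt (verit) mult_right_mono)
      then have "y = r n" using pick[OF elim(2) y(2)] by simp
      then have "\<bar>r n - s n\<bar> < \<epsilon> * s n" using y by simp
      then have "\<bar>r n / s n - 1\<bar> < \<epsilon>" using sp
        by (simp add: abs_less_iff field_simps)
      then show ?case using \<epsilon>(3) by (simp add: dist_real_def)
    qed
  qed
  have c1: "(\<lambda>n. r1 n / s1 n) \<longlonglongrightarrow> 1"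
  proof (rule conv[OF h1])
    fix n y assume gn: "good n" and py: "?p n y = 0" and yb: "\<bar>y - s1 n\<bar> < 1/4 * s1 n"
    show "y = r1 n" using uniq[OF gn py] ord[OF gn] yb gn unfolding good_def by (auto simp: abs_less_iff)
  qed (auto simp: good_def)
  have c2: "(\<lambda>n. r2 n / s2 n) \<longlonglongrightarrow> 1"
  proof (rule conv[OF h2])
    fix n y assume gn: "good n" and py: "?p n y = 0" and yb: "\<bar>y - s2 n\<bar> < 1/4 * s2 n"
    show "y = r2 n" using uniq[OF gn py] ord[OF gn] yb gn unfolding good_def by (auto simp: abs_less_iff)
  next
    fix n assume "good n" then show "0 < s2 n" unfolding good_def by auto
  qed
  have c3: "(\<lambda>n. r3 n / s3 n) \<longlonglongrightarrow> 1"
  proof (rule conv[OF h3])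
    fix n y assume gn: "good n" and py: "?p n y = 0" and yb: "\<bar>y - s3 n\<bar> < 1/4 * s3 n"
    show "y = r3 n" using uniq[OF gn py] ord[OF gn] yb gn unfolding good_def by (auto simp: abs_less_iff)
  next
    fix n assume "good n" then show "0 < s3 n" unfolding good_def by auto
  qed
  show ?thesis using ev c1 c2 c3 by blast
qed

lemma n_ratio: "(\<lambda>n. real n / real (n - 1)) \<longlonglongrightarrow> 1"
proof -
  have "(\<lambda>n. 1 + 1 / real (n - 1)) \<longlonglongrightarrow> 1 + 0"
  proof (intro tendsto_add tendsto_const)
    show "(\<lambda>n. 1 / real (n - 1)) \<longlonglongrightarrow> 0"
      apply (rule LIMSEQ_offset[where k=1]) using lim_1_over_n by simp
  qed
  moreover have "eventually (\<lambda>n. 1 + 1 / real (n - 1) = real n / real (n - 1)) sequentially"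
    using eventually_ge_at_top[of 2]
    by eventually_elim (auto simp: field_simps of_nat_diff)
  ultimately show ?thesis by (simp add: tendsto_cong)
qed

lemma inv_nm1: "(\<lambda>n. 1 / real (n - 1)) \<longlonglongrightarrow> 0"
proof -
  show ?thesis
    apply (rule LIMSEQ_offset[where k=1]) using lim_1_over_n by simp
qed

lemma sign_helper: "A < 0 \<Longrightarrow> 0 < B \<Longrightarrow> A * B < (0::real)"
  by (simp add: mult_neg_pos)
lemma sign_helper2: "0 < A \<Longrightarrow> B < 0 \<Longrightarrow> A * B < (0::real)"
  by (simp add: mult_pos_neg)

lemma regime_iii:
  fixes lam gam :: "nat \<Rightarrow> real"
  assumes lam_pos: "\<And>n. lam n > 0" and gam_pos: "\<And>n. gam n > 0"
    and h1: "filterlim (\<lambda>n. lam n / gam n) at_top sequentially"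
    and h2: "(\<lambda>n. lam n / (real n * gam n)) \<longlonglongrightarrow> 0"
  shows "\<exists>r1 r2 r3. eventually (\<lambda>n. r1 n \<noteq> r2 n \<and> r1 n \<noteq> r3 n \<and> r2 n \<noteq> r3 n
      \<and> pc (2 * lam n) (2 * lam n / real (n - 1)) (gam n) (r1 n) = 0
      \<and> pc (2 * lam n) (2 * lam n / real (n - 1)) (gam n) (r2 n) = 0
      \<and> pc (2 * lam n) (2 * lam n / real (n - 1)) (gam n) (r3 n) = 0
      \<and> 0 < r1 n \<and> 0 < r2 n \<and> 0 < r3 n) sequentially
    \<and> (\<lambda>n. r1 n / gam n) \<longlonglongrightarrow> 1 \<and> (\<lambda>n. r2 n / gam n) \<longlonglongrightarrow> 2
    \<and> filterlim (\<lambda>n. r3 n / gam n) at_top sequentially"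
proof -
  define a where "a n = 2 * lam n" for n
  define b where "b n = 2 * lam n / real (n - 1)" for n
  define g where "g n = gam n" for n
  define u where "u n = g n / a n" for n
  define v where "v n = b n / a n" for n
  define w where "w n = b n / g n" for n
  have apos: "\<And>n. a n > 0" and gpos: "\<And>n. g n > 0" using lam_pos gam_pos by (auto simp: a_def g_def)
  have u0: "u \<longlonglongrightarrow> 0"
  proof -
    have "(\<lambda>n. 1/2 * inverse (lam n / gam n)) \<longlonglongrightarrow> 1/2 * 0"
      by (intro tendsto_mult tendsto_const tendsto_inverse_0_at_top h1)
    moreover have "(\<lambda>n. 1/2 * inverse (lam n / gam n)) = u"
      using lam_pos gam_pos by (auto simp: u_def a_def g_def fun_eq_iff field_simps)
    ultimately show ?thesis by simp
  qed
  have v0: "v \<longlonglongrightarrow> 0"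
  proof -
    have "v = (\<lambda>n. 1 / real (n - 1))"
    proof
      fix n
      show "v n = 1 / real (n - 1)" using lam_pos[of n]
        by (cases "real (n - 1) = 0") (simp_all add: v_def a_def b_def field_simps)
    qed
    then show ?thesis using inv_nm1 by simp
  qed
  have w0: "w \<longlonglongrightarrow> 0"
  proof -
    have "(\<lambda>n. 2 * (lam n / (real n * gam n)) * (real n / real (n - 1))) \<longlonglongrightarrow> 2 * 0 * 1"
      by (intro tendsto_mult tendsto_const h2 n_ratio)
    moreover have "eventually (\<lambda>n. 2 * (lam n / (real n * gam n)) * (real n / real (n - 1)) = w n) sequentially"
      using eventually_ge_at_top[of 2]
    proof eventually_elim
      case (elim n)
      then show ?case using gam_pos[of n] by (simp add: w_def b_def g_def field_simps)
    qed
    ultimately show ?thesis by (simp add: tendsto_cong)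
  qed
  have k1: "eventually (\<lambda>n. g n ^ 2 * a n > 0) sequentially" by (intro always_eventually allI) (auto intro!: mult_pos_pos simp: apos gpos less_imp_neq[OF gpos, symmetric])
  have k3: "eventually (\<lambda>n. a n ^ 3 > 0) sequentially" by (intro always_eventually allI) (auto intro!: mult_pos_pos simp: apos gpos less_imp_neq[OF gpos, symmetric])
  have sp1: "eventually (\<lambda>n. g n > 0) sequentially" by (intro always_eventually allI) (auto intro!: mult_pos_pos simp: apos gpos less_imp_neq[OF gpos, symmetric])
  have sp2: "eventually (\<lambda>n. 2 * g n > 0) sequentially" by (intro always_eventually allI) (auto intro!: mult_pos_pos simp: apos gpos less_imp_neq[OF gpos, symmetric])
  have sp3: "eventually (\<lambda>n. a n > 0) sequentially" by (intro always_eventually allI) (auto intro!: mult_pos_pos simp: apos gpos less_imp_neq[OF gpos, symmetric])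
  have L1: "(\<lambda>n. pc (a n) (b n) (g n) (g n * y) / (g n ^ 2 * a n)) \<longlonglongrightarrow>
      (0 * y - 1) * (y - 0 - 2) * (y - 0 - 1) - 0 * (y - 0 - 3)" for y
  proof -
    have "(\<lambda>n. (u n * y - 1) * (y - w n - 2) * (y - w n - 1) - w n * (y - w n - 3)) \<longlonglongrightarrow>
      (0 * y - 1) * (y - 0 - 2) * (y - 0 - 1) - 0 * (y - 0 - 3)"
      by (intro tendsto_intros u0 w0)
    moreover have "(\<lambda>n. (u n * y - 1) * (y - w n - 2) * (y - w n - 1) - w n * (y - w n - 3)) =
       (\<lambda>n. pc (a n) (b n) (g n) (g n * y) / (g n ^ 2 * a n))"
    proof
      fix n
      show "(u n * y - 1) * (y - w n - 2) * (y - w n - 1) - w n * (y - w n - 3) = pc (a n) (b n) (g n) (g n * y) / (g n ^ 2 * a n)"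
        using apos[of n] gpos[of n] unfolding pc_def u_def w_def by (simp add: field_simps power2_eq_square)
    qed
    ultimately show ?thesis by simp
  qed
  have L2: "(\<lambda>n. pc (a n) (b n) (g n) (2 * g n * y) / (g n ^ 2 * a n)) \<longlonglongrightarrow>
      (2 * 0 * y - 1) * (2 * y - 0 - 2) * (2 * y - 0 - 1) - 0 * (2 * y - 0 - 3)" for y
  proof -
    have "(\<lambda>n. (2 * u n * y - 1) * (2 * y - w n - 2) * (2 * y - w n - 1) - w n * (2 * y - w n - 3)) \<longlonglongrightarrow>
      (2 * 0 * y - 1) * (2 * y - 0 - 2) * (2 * y - 0 - 1) - 0 * (2 * y - 0 - 3)"
      by (intro tendsto_intros u0 w0)
    moreover have "(\<lambda>n. (2 * u n * y - 1) * (2 * y - w n - 2) * (2 * y - w n - 1) - w n * (2 * y - w n - 3)) =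
       (\<lambda>n. pc (a n) (b n) (g n) (2 * g n * y) / (g n ^ 2 * a n))"
    proof
      fix n
      show "(2 * u n * y - 1) * (2 * y - w n - 2) * (2 * y - w n - 1) - w n * (2 * y - w n - 3) = pc (a n) (b n) (g n) (2 * g n * y) / (g n ^ 2 * a n)"
        using apos[of n] gpos[of n] unfolding pc_def u_def w_def by (simp add: field_simps power2_eq_square)
    qed
    ultimately show ?thesis by simp
  qed
  have L3: "(\<lambda>n. pc (a n) (b n) (g n) (a n * y) / (a n ^ 3)) \<longlonglongrightarrow>
      (y - 1) * (y - 0 - 2 * 0) * (y - 0 - 0) - 0 * (y - 0 - 3 * 0)" for y
  proof -
    have "(\<lambda>n. (y - 1) * (y - v n - 2 * u n) * (y - v n - u n) - v n * (y - v n - 3 * u n)) \<longlonglongrightarrow>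
      (y - 1) * (y - 0 - 2 * 0) * (y - 0 - 0) - 0 * (y - 0 - 3 * 0)"
      by (intro tendsto_intros u0 v0)
    moreover have "(\<lambda>n. (y - 1) * (y - v n - 2 * u n) * (y - v n - u n) - v n * (y - v n - 3 * u n)) =
       (\<lambda>n. pc (a n) (b n) (g n) (a n * y) / (a n ^ 3))"
    proof
      fix n
      show "(y - 1) * (y - v n - 2 * u n) * (y - v n - u n) - v n * (y - v n - 3 * u n) = pc (a n) (b n) (g n) (a n * y) / (a n ^ 3)"
        using apos[of n] gpos[of n] unfolding pc_def u_def v_def by (simp add: field_simps power3_eq_cube)
    qed
    ultimately show ?thesis by simp
  qed
  have S1: "((0 * (1 - e) - 1) * ((1 - e) - 0 - 2) * ((1 - e) - 0 - 1) - 0 * ((1 - e) - 0 - 3)) *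
            ((0 * (1 + e) - 1) * ((1 + e) - 0 - 2) * ((1 + e) - 0 - 1) - 0 * ((1 + e) - 0 - 3)) < 0"
    if "0 < e" "e \<le> 1/4" for e :: real
  proof (rule sign_helper)
    show "(0 * (1 - e) - 1) * ((1 - e) - 0 - 2) * ((1 - e) - 0 - 1) - 0 * ((1 - e) - 0 - 3) < 0"
      using that by (simp add: algebra_simps; smt (verit) mult_pos_pos)
    show "0 < (0 * (1 + e) - 1) * ((1 + e) - 0 - 2) * ((1 + e) - 0 - 1) - 0 * ((1 + e) - 0 - 3)"
      using that by (simp add: algebra_simps; smt (verit) mult_pos_pos)
  qed
  have S2: "((2 * 0 * (1 - e) - 1) * (2 * (1 - e) - 0 - 2) * (2 * (1 - e) - 0 - 1) - 0 * (2 * (1 - e) - 0 - 3)) *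
            ((2 * 0 * (1 + e) - 1) * (2 * (1 + e) - 0 - 2) * (2 * (1 + e) - 0 - 1) - 0 * (2 * (1 + e) - 0 - 3)) < 0"
    if "0 < e" "e \<le> 1/4" for e :: real
  proof (rule sign_helper2)
    show "0 < (2 * 0 * (1 - e) - 1) * (2 * (1 - e) - 0 - 2) * (2 * (1 - e) - 0 - 1) - 0 * (2 * (1 - e) - 0 - 3)"
      using that by (simp add: algebra_simps; smt (verit) mult_pos_pos)
    show "(2 * 0 * (1 + e) - 1) * (2 * (1 + e) - 0 - 2) * (2 * (1 + e) - 0 - 1) - 0 * (2 * (1 + e) - 0 - 3) < 0"
      using that by (simp add: algebra_simps; smt (verit) mult_pos_pos)
  qed
  have S3: "(((1 - e) - 1) * ((1 - e) - 0 - 2 * 0) * ((1 - e) - 0 - 0) - 0 * ((1 - e) - 0 - 3 * 0)) *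
            (((1 + e) - 1) * ((1 + e) - 0 - 2 * 0) * ((1 + e) - 0 - 0) - 0 * ((1 + e) - 0 - 3 * 0)) < 0"
    if "0 < e" "e \<le> 1/4" for e :: real
  proof (rule sign_helper)
    show "((1 - e) - 1) * ((1 - e) - 0 - 2 * 0) * ((1 - e) - 0 - 0) - 0 * ((1 - e) - 0 - 3 * 0) < 0"
      using that by (simp add: mult_neg_pos)
    show "0 < ((1 + e) - 1) * ((1 + e) - 0 - 2 * 0) * ((1 + e) - 0 - 0) - 0 * ((1 + e) - 0 - 3 * 0)"
      using that by simp
  qed
  have sep: "eventually (\<lambda>n. 0 < g n \<and> 2 * g n \<le> 2 * g n \<and> 2 * (2 * g n) \<le> a n) sequentially"
  proof -
    have "eventually (\<lambda>n. u n < 1/4) sequentially" using u0 by (rule order_tendstoD) simp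
    then show ?thesis
    proof eventually_elim
      case (elim n)
      then show ?case using apos[of n] gpos[of n] by (simp add: u_def field_simps)
    qed
  qed
  obtain r1 r2 r3 where R: "eventually (\<lambda>n. r1 n \<noteq> r2 n \<and> r1 n \<noteq> r3 n \<and> r2 n \<noteq> r3 n
      \<and> pc (a n) (b n) (g n) (r1 n) = 0 \<and> pc (a n) (b n) (g n) (r2 n) = 0 \<and> pc (a n) (b n) (g n) (r3 n) = 0
      \<and> 0 < r1 n \<and> 0 < r2 n \<and> 0 < r3 n) sequentially"
    and c1: "(\<lambda>n. r1 n / g n) \<longlonglongrightarrow> 1" and c2: "(\<lambda>n. r2 n / (2 * g n)) \<longlonglongrightarrow> 1"
    and c3: "(\<lambda>n. r3 n / a n) \<longlonglongrightarrow> 1"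
    using canon_roots[OF sep, of a b g]
      root_near[OF L1 k1 sp1 _ S1] root_near[OF L2 k1 sp2 _ S2] root_near[OF L3 k3 sp3 _ S3]
    by blast
  have d2: "(\<lambda>n. r2 n / gam n) \<longlonglongrightarrow> 2"
  proof -
    have "(\<lambda>n. 2 * (r2 n / (2 * g n))) \<longlonglongrightarrow> 2 * 1" by (intro tendsto_intros c2)
    then show ?thesis by (simp add: g_def)
  qed
  have d3: "filterlim (\<lambda>n. r3 n / gam n) at_top sequentially"
  proof -
    have ag: "filterlim (\<lambda>n. 2 * (lam n / gam n)) at_top sequentially"
      by (intro filterlim_tendsto_pos_mult_at_top[OF tendsto_const _ h1]) simp
    have "filterlim (\<lambda>n. (r3 n / a n) * (2 * (lam n / gam n))) at_top sequentially"
      by (intro filterlim_tendsto_pos_mult_at_top[OF c3 _ ag]) simp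
    moreover have "(\<lambda>n. (r3 n / a n) * (2 * (lam n / gam n))) = (\<lambda>n. r3 n / gam n)"
    proof
      fix n show "(r3 n / a n) * (2 * (lam n / gam n)) = r3 n / gam n"
        using lam_pos[of n] gam_pos[of n] by (simp add: a_def field_simps)
    qed
    ultimately show ?thesis by simp
  qed
  show ?thesis using R c1 d2 d3 unfolding a_def b_def g_def by blast
qed

lemma regime_i:
  fixes lam gam :: "nat \<Rightarrow> real"
  assumes lam_pos: "\<And>n. lam n > 0" and gam_pos: "\<And>n. gam n > 0"
    and h1: "filterlim (\<lambda>n. lam n / (real n * gam n)) at_top sequentially"
  shows "\<exists>r1 r2 r3. eventually (\<lambda>n. r1 n \<noteq> r2 n \<and> r1 n \<noteq> r3 n \<and> r2 n \<noteq> r3 n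
      \<and> pc (2 * lam n) (2 * lam n / real (n - 1)) (gam n) (r1 n) = 0
      \<and> pc (2 * lam n) (2 * lam n / real (n - 1)) (gam n) (r2 n) = 0
      \<and> pc (2 * lam n) (2 * lam n / real (n - 1)) (gam n) (r3 n) = 0
      \<and> 0 < r1 n \<and> 0 < r2 n \<and> 0 < r3 n) sequentially
    \<and> (\<lambda>n. r1 n / (real n * (gam n)\<^sup>2 / lam n)) \<longlonglongrightarrow> 1
    \<and> filterlim (\<lambda>n. r2 n / (real n * (gam n)\<^sup>2 / lam n)) at_top sequentially
    \<and> eventually (\<lambda>n. 3/2 * (r2 n / (real n * (gam n)\<^sup>2 / lam n)) \<le> r3 n / (real n * (gam n)\<^sup>2 / lam n)) sequentially"
proof -
  define a where "a n = 2 * lam n" for n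
  define b where "b n = 2 * lam n / real (n - 1)" for n
  define g where "g n = gam n" for n
  define Z where "Z n = real n * gam n / lam n" for n
  define s where "s n = Z n * g n" for n
  define u where "u n = g n / a n" for n
  define v where "v n = b n / a n" for n
  define m where "m n = Z n * (b n / g n)" for n
  define w' where "w' n = g n / b n" for n
  have apos: "\<And>n. a n > 0" and gpos: "\<And>n. g n > 0" using lam_pos gam_pos by (auto simp: a_def g_def)
  have ev2: "eventually (\<lambda>n. n \<ge> 2) sequentially" by (rule eventually_ge_at_top)
  have bpos: "eventually (\<lambda>n. b n > 0) sequentially"
    using ev2 by eventually_elim (use lam_pos in \<open>auto simp: b_def\<close>)
  have s_eq: "s n = real n * (gam n)\<^sup>2 / lam n" for n
    by (simp add: s_def Z_def g_def power2_eq_square)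
  have Z0: "Z \<longlonglongrightarrow> 0"
  proof -
    have "(\<lambda>n. inverse (lam n / (real n * gam n))) \<longlonglongrightarrow> 0"
      by (rule tendsto_inverse_0_at_top[OF h1])
    moreover have "(\<lambda>n. inverse (lam n / (real n * gam n))) = Z"
      by (auto simp: Z_def fun_eq_iff)
    ultimately show ?thesis by simp
  qed
  have Zpos: "eventually (\<lambda>n. Z n > 0) sequentially"
    using ev2 by eventually_elim (use lam_pos gam_pos in \<open>auto simp: Z_def\<close>)
  have u0: "u \<longlonglongrightarrow> 0"
  proof -
    have "(\<lambda>n. Z n * (1/2 * (1 / real n))) \<longlonglongrightarrow> 0 * (1/2 * 0)"
      by (intro tendsto_intros Z0 lim_1_over_n)
    moreover have "eventually (\<lambda>n. Z n * (1/2 * (1 / real n)) = u n) sequentially"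
      using ev2 by eventually_elim (use lam_pos gam_pos in \<open>auto simp: Z_def u_def a_def g_def field_simps\<close>)
    ultimately show ?thesis by (simp add: tendsto_cong)
  qed
  have v0: "v \<longlonglongrightarrow> 0"
  proof -
    have "v = (\<lambda>n. 1 / real (n - 1))"
    proof
      fix n
      show "v n = 1 / real (n - 1)" using lam_pos[of n]
        by (cases "real (n - 1) = 0") (simp_all add: v_def a_def b_def field_simps)
    qed
    then show ?thesis using inv_nm1 by simp
  qed
  have m2: "m \<longlonglongrightarrow> 2"
  proof -
    have "(\<lambda>n. 2 * (real n / real (n - 1))) \<longlonglongrightarrow> 2 * 1" by (intro tendsto_intros n_ratio)
    moreover have "eventually (\<lambda>n. 2 * (real n / real (n - 1)) = m n) sequentially"
      using ev2
    proof eventually_elim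
      case (elim n)
      have "real (n - 1) > 0" using elim by simp
      then show ?case using lam_pos[of n] gam_pos[of n] by (simp add: m_def Z_def b_def g_def field_simps)
    qed
    ultimately show ?thesis by (simp add: tendsto_cong)
  qed
  have w0: "w' \<longlonglongrightarrow> 0"
  proof -
    have r: "(\<lambda>n. 1 - 1 / real n) \<longlonglongrightarrow> 1 - 0" by (intro tendsto_intros lim_1_over_n)
    have "(\<lambda>n. Z n * (1/2 * (1 - 1 / real n))) \<longlonglongrightarrow> 0 * (1/2 * (1 - 0))"
      by (intro tendsto_intros Z0 r)
    moreover have "eventually (\<lambda>n. Z n * (1/2 * (1 - 1 / real n)) = w' n) sequentially"
      using ev2
    proof eventually_elim
      case (elim n)
      have "real (n - 1) > 0" "real n > 0" using elim by simp_all
      then show ?case using lam_pos[of n] gam_pos[of n] by (simp add: Z_def w'_def b_def g_def field_simps of_nat_diff)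
    qed
    ultimately show ?thesis by (simp add: tendsto_cong)
  qed
  have k1: "eventually (\<lambda>n. 2 * a n * g n ^ 2 > 0) sequentially"
    by (intro always_eventually allI) (auto intro!: mult_pos_pos simp: apos gpos less_imp_neq[OF gpos, symmetric])
  have k2: "eventually (\<lambda>n. a n * b n ^ 2 > 0) sequentially"
    using bpos by eventually_elim (auto intro!: mult_pos_pos simp: apos)
  have k3: "eventually (\<lambda>n. a n ^ 3 > 0) sequentially"
    by (intro always_eventually allI) (auto simp: apos)
  have sp1: "eventually (\<lambda>n. s n > 0) sequentially"
    using Zpos by eventually_elim (auto simp: s_def gpos)
  have sp3: "eventually (\<lambda>n. a n > 0) sequentially" by (intro always_eventually allI) (simp add: apos)
  have L1: "(\<lambda>n. pc (a n) (b n) (g n) (s n * y) / (2 * a n * g n ^ 2)) \<longlonglongrightarrow>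
      (0 ^ 3 * 0 / 2) * y ^ 3 - (0 ^ 2 * (1 + 2 * 0 + 3 * 0) / 2) * y ^ 2
      + ((2 * 0 * 0 + 3 * 2 * 0 + 2 * 0 + 2 + 3 * 0) / 2) * y - 1" for y
  proof -
    have "(\<lambda>n. (Z n ^ 3 * u n / 2) * y ^ 3 - (Z n ^ 2 * (1 + 2 * v n + 3 * u n) / 2) * y ^ 2
      + ((2 * Z n * u n + 3 * m n * u n + m n * v n + m n + 3 * Z n) / 2) * y - 1) \<longlonglongrightarrow>
      (0 ^ 3 * 0 / 2) * y ^ 3 - (0 ^ 2 * (1 + 2 * 0 + 3 * 0) / 2) * y ^ 2
      + ((2 * 0 * 0 + 3 * 2 * 0 + 2 * 0 + 2 + 3 * 0) / 2) * y - 1"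
      by (intro tendsto_intros Z0 u0 v0 m2) auto
    moreover have "(\<lambda>n. (Z n ^ 3 * u n / 2) * y ^ 3 - (Z n ^ 2 * (1 + 2 * v n + 3 * u n) / 2) * y ^ 2
      + ((2 * Z n * u n + 3 * m n * u n + m n * v n + m n + 3 * Z n) / 2) * y - 1) =
       (\<lambda>n. pc (a n) (b n) (g n) (s n * y) / (2 * a n * g n ^ 2))"
    proof
      fix n
      show "(Z n ^ 3 * u n / 2) * y ^ 3 - (Z n ^ 2 * (1 + 2 * v n + 3 * u n) / 2) * y ^ 2
      + ((2 * Z n * u n + 3 * m n * u n + m n * v n + m n + 3 * Z n) / 2) * y - 1 =
        pc (a n) (b n) (g n) (s n * y) / (2 * a n * g n ^ 2)"
        using apos[of n] gpos[of n] unfolding pc_def u_def v_def m_def s_def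
        by (simp add: field_simps power2_eq_square power3_eq_cube)
    qed
    ultimately show ?thesis by simp
  qed
  have L2: "(\<lambda>n. pc (a n) (b n) (g n) (b n * y) / (a n * b n ^ 2)) \<longlonglongrightarrow>
      (0 * y - 1) * (y - 1 - 2 * 0) * (y - 1 - 0) - (y - 1 - 3 * 0)" for y
  proof -
    have "(\<lambda>n. (v n * y - 1) * (y - 1 - 2 * w' n) * (y - 1 - w' n) - (y - 1 - 3 * w' n)) \<longlonglongrightarrow>
      (0 * y - 1) * (y - 1 - 2 * 0) * (y - 1 - 0) - (y - 1 - 3 * 0)"
      by (intro tendsto_intros v0 w0)
    moreover have "eventually (\<lambda>n. (v n * y - 1) * (y - 1 - 2 * w' n) * (y - 1 - w' n) - (y - 1 - 3 * w' n) =
       pc (a n) (b n) (g n) (b n * y) / (a n * b n ^ 2)) sequentially"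
      using bpos
    proof eventually_elim
      case (elim n)
      show ?case
        using apos[of n] gpos[of n] elim unfolding pc_def v_def w'_def
        by (simp add: field_simps power2_eq_square)
    qed
    ultimately show ?thesis by (simp add: tendsto_cong)
  qed
  have L3: "(\<lambda>n. pc (a n) (b n) (g n) (a n * y) / (a n ^ 3)) \<longlonglongrightarrow>
      (y - 1) * (y - 0 - 2 * 0) * (y - 0 - 0) - 0 * (y - 0 - 3 * 0)" for y
  proof -
    have "(\<lambda>n. (y - 1) * (y - v n - 2 * u n) * (y - v n - u n) - v n * (y - v n - 3 * u n)) \<longlonglongrightarrow>
      (y - 1) * (y - 0 - 2 * 0) * (y - 0 - 0) - 0 * (y - 0 - 3 * 0)"
      by (intro tendsto_intros u0 v0)
    moreover have "(\<lambda>n. (y - 1) * (y - v n - 2 * u n) * (y - v n - u n) - v n * (y - v n - 3 * u n)) =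
       (\<lambda>n. pc (a n) (b n) (g n) (a n * y) / (a n ^ 3))"
    proof
      fix n
      show "(y - 1) * (y - v n - 2 * u n) * (y - v n - u n) - v n * (y - v n - 3 * u n) = pc (a n) (b n) (g n) (a n * y) / (a n ^ 3)"
        using apos[of n] gpos[of n] unfolding pc_def u_def v_def by (simp add: field_simps power3_eq_cube)
    qed
    ultimately show ?thesis by simp
  qed
  have S1: "((0 ^ 3 * 0 / 2) * (1 - e) ^ 3 - (0 ^ 2 * (1 + 2 * 0 + 3 * 0) / 2) * (1 - e) ^ 2
      + ((2 * 0 * 0 + 3 * 2 * 0 + 2 * 0 + 2 + 3 * 0) / 2) * (1 - e) - 1) *
      ((0 ^ 3 * 0 / 2) * (1 + e) ^ 3 - (0 ^ 2 * (1 + 2 * 0 + 3 * 0) / 2) * (1 + e) ^ 2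
      + ((2 * 0 * 0 + 3 * 2 * 0 + 2 * 0 + 2 + 3 * 0) / 2) * (1 + e) - 1) < 0"
    if "0 < e" "e \<le> 1/4" for e :: real
    using that by (simp add: mult_neg_pos)
  have S2: "((0 * (1 - e) - 1) * ((1 - e) - 1 - 2 * 0) * ((1 - e) - 1 - 0) - ((1 - e) - 1 - 3 * 0)) *
      ((0 * (1 + e) - 1) * ((1 + e) - 1 - 2 * 0) * ((1 + e) - 1 - 0) - ((1 + e) - 1 - 3 * 0)) < 0"
    if "0 < e" "e \<le> 1/4" for e :: real
  proof (rule sign_helper2)
    have "0 < e * (1 - e)" using that by (intro mult_pos_pos) auto
    then show "0 < (0 * (1 - e) - 1) * ((1 - e) - 1 - 2 * 0) * ((1 - e) - 1 - 0) - ((1 - e) - 1 - 3 * 0)"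
      by (simp add: algebra_simps)
    have "0 < e * (1 + e)" using that by (intro mult_pos_pos) auto
    then show "(0 * (1 + e) - 1) * ((1 + e) - 1 - 2 * 0) * ((1 + e) - 1 - 0) - ((1 + e) - 1 - 3 * 0) < 0"
      by (simp add: algebra_simps)
  qed
  have S3: "(((1 - e) - 1) * ((1 - e) - 0 - 2 * 0) * ((1 - e) - 0 - 0) - 0 * ((1 - e) - 0 - 3 * 0)) *
            (((1 + e) - 1) * ((1 + e) - 0 - 2 * 0) * ((1 + e) - 0 - 0) - 0 * ((1 + e) - 0 - 3 * 0)) < 0"
    if "0 < e" "e \<le> 1/4" for e :: real
  proof (rule sign_helper)
    show "((1 - e) - 1) * ((1 - e) - 0 - 2 * 0) * ((1 - e) - 0 - 0) - 0 * ((1 - e) - 0 - 3 * 0) < 0"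
      using that by (simp add: mult_neg_pos)
    show "0 < ((1 + e) - 1) * ((1 + e) - 0 - 2 * 0) * ((1 + e) - 0 - 0) - 0 * ((1 + e) - 0 - 3 * 0)"
      using that by simp
  qed
  have Zw0: "(\<lambda>n. Z n * w' n) \<longlonglongrightarrow> 0" using tendsto_mult[OF Z0 w0] by simp
  have sep: "eventually (\<lambda>n. 0 < s n \<and> 2 * s n \<le> b n \<and> 2 * b n \<le> a n) sequentially"
  proof -
    have "eventually (\<lambda>n. Z n * w' n < 1/2) sequentially" using Zw0 by (rule order_tendstoD) simp
    then show ?thesis using sp1 bpos eventually_ge_at_top[of 3]
    proof eventually_elim
      case (elim n)
      have "2 * s n \<le> b n"
      proof -
        have "2 * s n = 2 * (Z n * w' n) * b n" using elim by (simp add: s_def w'_def)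
        also have "\<dots> \<le> b n" using elim by (simp add: mult_le_cancel_right1 less_imp_le)
        finally show ?thesis .
      qed
      moreover have "2 * b n \<le> a n"
      proof -
        have "real (n - 1) \<ge> 2" using elim by simp
        then show ?thesis using lam_pos[of n] by (simp add: a_def b_def field_simps)
      qed
      ultimately show ?case using elim by simp
    qed
  qed
  obtain r1 r2 r3 where R: "eventually (\<lambda>n. r1 n \<noteq> r2 n \<and> r1 n \<noteq> r3 n \<and> r2 n \<noteq> r3 n
      \<and> pc (a n) (b n) (g n) (r1 n) = 0 \<and> pc (a n) (b n) (g n) (r2 n) = 0 \<and> pc (a n) (b n) (g n) (r3 n) = 0
      \<and> 0 < r1 n \<and> 0 < r2 n \<and> 0 < r3 n) sequentially"
    and c1: "(\<lambda>n. r1 n / s n) \<longlonglongrightarrow> 1" and c2: "(\<lambda>n. r2 n / b n) \<longlonglongrightarrow> 1"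
    and c3: "(\<lambda>n. r3 n / a n) \<longlonglongrightarrow> 1"
    using canon_roots[OF sep, of a b g]
      root_near[OF L1 k1 sp1 _ S1] root_near[OF L2 k2 bpos _ S2] root_near[OF L3 k3 sp3 _ S3]
    by blast
  have d2: "filterlim (\<lambda>n. r2 n / s n) at_top sequentially"
  proof -
    have gi: "filterlim (\<lambda>n. inverse (Z n * w' n)) at_top sequentially"
      by (rule filterlim_inverse_at_top[OF Zw0]) (use Zpos bpos in \<open>eventually_elim, simp add: w'_def gpos\<close>)
    have fl: "filterlim (\<lambda>n. (r2 n / b n) * inverse (Z n * w' n)) at_top sequentially"
      by (intro filterlim_tendsto_pos_mult_at_top[OF c2 _ gi]) simp
    have ev: "eventually (\<lambda>n. (r2 n / b n) * inverse (Z n * w' n) = r2 n / s n) sequentially"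
      using Zpos bpos
    proof eventually_elim
      case (elim n) then show ?case using gpos[of n] by (simp add: s_def w'_def field_simps)
    qed
    show ?thesis by (rule filterlim_mono_eventually[OF fl order_refl order_refl ev])
  qed
  have d3: "eventually (\<lambda>n. 3/2 * (r2 n / s n) \<le> r3 n / s n) sequentially"
  proof -
    have "eventually (\<lambda>n. r2 n / b n < 11/10) sequentially" using c2 by (rule order_tendstoD) simp
    moreover have "eventually (\<lambda>n. 9/10 < r3 n / a n) sequentially" using c3 by (rule order_tendstoD) simp
    ultimately show ?thesis using bpos sp1 eventually_ge_at_top[of 5]
    proof eventually_elim
      case (elim n)
      have ab: "4 * b n \<le> a n"
      proof -
        have "real (n - 1) \<ge> 4" using elim by simp
        then show ?thesis using lam_pos[of n] by (simp add: a_def b_def field_simps)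
      qed
      have "r2 n < 11/10 * b n" using elim by (simp add: field_simps)
      moreover have "9/10 * a n < r3 n" using elim apos[of n] by (simp add: field_simps)
      ultimately have "3/2 * r2 n \<le> r3 n" using ab elim by linarith
      then show ?case using elim by (simp add: field_simps)
    qed
  qed
  show ?thesis using R c1 d2 d3 unfolding a_def b_def g_def s_eq by blast
qed

lemma regime_ii:
  fixes lam gam :: "nat \<Rightarrow> real"
  assumes lam_pos: "\<And>n. lam n > 0" and gam_pos: "\<And>n. gam n > 0"
    and h1: "(\<lambda>n. lam n / gam n) \<longlonglongrightarrow> 0"
  shows "\<exists>r1 r2 r3. eventually (\<lambda>n. r1 n \<noteq> r2 n \<and> r1 n \<noteq> r3 n \<and> r2 n \<noteq> r3 n
      \<and> pc (2 * lam n) (2 * lam n / real (n - 1)) (gam n) (r1 n) = 0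
      \<and> pc (2 * lam n) (2 * lam n / real (n - 1)) (gam n) (r2 n) = 0
      \<and> pc (2 * lam n) (2 * lam n / real (n - 1)) (gam n) (r3 n) = 0
      \<and> 0 < r1 n \<and> 0 < r2 n \<and> 0 < r3 n) sequentially
    \<and> (\<lambda>n. r1 n / (2 * lam n)) \<longlonglongrightarrow> 1 \<and> filterlim (\<lambda>n. r2 n / (2 * lam n)) at_top sequentially
    \<and> eventually (\<lambda>n. 3/2 * (r2 n / (2 * lam n)) \<le> r3 n / (2 * lam n)) sequentially"
proof -
  define a where "a n = 2 * lam n" for n
  define b where "b n = 2 * lam n / real (n - 1)" for n
  define g where "g n = gam n" for n
  define U where "U n = a n / g n" for n
  define v where "v n = b n / a n" for n
  define w where "w n = b n / g n" for n
  have apos: "\<And>n. a n > 0" and gpos: "\<And>n. g n > 0" using lam_pos gam_pos by (auto simp: a_def g_def)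
  have U0: "U \<longlonglongrightarrow> 0"
  proof -
    have "(\<lambda>n. 2 * (lam n / gam n)) \<longlonglongrightarrow> 2 * 0" by (intro tendsto_intros h1)
    moreover have "(\<lambda>n. 2 * (lam n / gam n)) = U" by (auto simp: U_def a_def g_def fun_eq_iff)
    ultimately show ?thesis by simp
  qed
  have v0: "v \<longlonglongrightarrow> 0"
  proof -
    have "v = (\<lambda>n. 1 / real (n - 1))"
    proof
      fix n
      show "v n = 1 / real (n - 1)" using lam_pos[of n]
        by (cases "real (n - 1) = 0") (simp_all add: v_def a_def b_def field_simps)
    qed
    then show ?thesis using inv_nm1 by simp
  qed
  have w0: "w \<longlonglongrightarrow> 0"
  proof -
    have "(\<lambda>n. v n * U n) \<longlonglongrightarrow> 0 * 0" by (intro tendsto_intros v0 U0)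
    moreover have "(\<lambda>n. v n * U n) = w"
    proof
      fix n show "v n * U n = w n" using apos[of n] gpos[of n] by (simp add: v_def U_def w_def field_simps)
    qed
    ultimately show ?thesis by simp
  qed
  have k1: "eventually (\<lambda>n. a n * g n ^ 2 > 0) sequentially"
    by (intro always_eventually allI) (auto intro!: mult_pos_pos simp: apos gpos less_imp_neq[OF gpos, symmetric])
  have k3: "eventually (\<lambda>n. g n ^ 3 > 0) sequentially"
    by (intro always_eventually allI) (auto intro!: mult_pos_pos simp: apos gpos less_imp_neq[OF gpos, symmetric])
  have sp1: "eventually (\<lambda>n. a n > 0) sequentially" by (intro always_eventually allI) (simp add: apos)
  have sp2: "eventually (\<lambda>n. g n > 0) sequentially" by (intro always_eventually allI) (simp add: gpos)
  have sp3: "eventually (\<lambda>n. 2 * g n > 0) sequentially" by (intro always_eventually allI) (simp add: gpos)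
  have L1: "(\<lambda>n. pc (a n) (b n) (g n) (a n * y) / (a n * g n ^ 2)) \<longlonglongrightarrow>
      (y - 1) * (0 * y - 0 - 2) * (0 * y - 0 - 1) - 0 * (0 * y - 0 - 3)" for y
  proof -
    have "(\<lambda>n. (y - 1) * (U n * y - w n - 2) * (U n * y - w n - 1) - w n * (U n * y - w n - 3)) \<longlonglongrightarrow>
      (y - 1) * (0 * y - 0 - 2) * (0 * y - 0 - 1) - 0 * (0 * y - 0 - 3)"
      by (intro tendsto_intros U0 w0)
    moreover have "(\<lambda>n. (y - 1) * (U n * y - w n - 2) * (U n * y - w n - 1) - w n * (U n * y - w n - 3)) =
       (\<lambda>n. pc (a n) (b n) (g n) (a n * y) / (a n * g n ^ 2))"
    proof
      fix n
      show "(y - 1) * (U n * y - w n - 2) * (U n * y - w n - 1) - w n * (U n * y - w n - 3) = pc (a n) (b n) (g n) (a n * y) / (a n * g n ^ 2)"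
        using apos[of n] gpos[of n] unfolding pc_def U_def w_def by (simp add: field_simps power2_eq_square)
    qed
    ultimately show ?thesis by simp
  qed
  have L2: "(\<lambda>n. pc (a n) (b n) (g n) (g n * y) / (g n ^ 3)) \<longlonglongrightarrow>
      (y - 0) * (y - 0 - 2) * (y - 0 - 1) - 0 * 0 * (y - 0 - 3)" for y
  proof -
    have "(\<lambda>n. (y - U n) * (y - w n - 2) * (y - w n - 1) - U n * w n * (y - w n - 3)) \<longlonglongrightarrow>
      (y - 0) * (y - 0 - 2) * (y - 0 - 1) - 0 * 0 * (y - 0 - 3)"
      by (intro tendsto_intros U0 w0)
    moreover have "(\<lambda>n. (y - U n) * (y - w n - 2) * (y - w n - 1) - U n * w n * (y - w n - 3)) =
       (\<lambda>n. pc (a n) (b n) (g n) (g n * y) / (g n ^ 3))"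
    proof
      fix n
      show "(y - U n) * (y - w n - 2) * (y - w n - 1) - U n * w n * (y - w n - 3) = pc (a n) (b n) (g n) (g n * y) / (g n ^ 3)"
        using apos[of n] gpos[of n] unfolding pc_def U_def w_def by (simp add: field_simps power3_eq_cube)
    qed
    ultimately show ?thesis by simp
  qed
  have L3: "(\<lambda>n. pc (a n) (b n) (g n) (2 * g n * y) / (g n ^ 3)) \<longlonglongrightarrow>
      (2 * y - 0) * (2 * y - 0 - 2) * (2 * y - 0 - 1) - 0 * 0 * (2 * y - 0 - 3)" for y
  proof -
    have "(\<lambda>n. (2 * y - U n) * (2 * y - w n - 2) * (2 * y - w n - 1) - U n * w n * (2 * y - w n - 3)) \<longlonglongrightarrow>
      (2 * y - 0) * (2 * y - 0 - 2) * (2 * y - 0 - 1) - 0 * 0 * (2 * y - 0 - 3)"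
      by (intro tendsto_intros U0 w0)
    moreover have "(\<lambda>n. (2 * y - U n) * (2 * y - w n - 2) * (2 * y - w n - 1) - U n * w n * (2 * y - w n - 3)) =
       (\<lambda>n. pc (a n) (b n) (g n) (2 * g n * y) / (g n ^ 3))"
    proof
      fix n
      show "(2 * y - U n) * (2 * y - w n - 2) * (2 * y - w n - 1) - U n * w n * (2 * y - w n - 3) = pc (a n) (b n) (g n) (2 * g n * y) / (g n ^ 3)"
        using apos[of n] gpos[of n] unfolding pc_def U_def w_def by (simp add: field_simps power3_eq_cube)
    qed
    ultimately show ?thesis by simp
  qed
  have S1: "(((1 - e) - 1) * (0 * (1 - e) - 0 - 2) * (0 * (1 - e) - 0 - 1) - 0 * (0 * (1 - e) - 0 - 3)) *
            (((1 + e) - 1) * (0 * (1 + e) - 0 - 2) * (0 * (1 + e) - 0 - 1) - 0 * (0 * (1 + e) - 0 - 3)) < 0"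
    if "0 < e" "e \<le> 1/4" for e :: real
    using that by (simp add: algebra_simps; smt (verit) mult_pos_pos)
  have S2: "(((1 - e) - 0) * ((1 - e) - 0 - 2) * ((1 - e) - 0 - 1) - 0 * 0 * ((1 - e) - 0 - 3)) *
            (((1 + e) - 0) * ((1 + e) - 0 - 2) * ((1 + e) - 0 - 1) - 0 * 0 * ((1 + e) - 0 - 3)) < 0"
    if "0 < e" "e \<le> 1/4" for e :: real
  proof (rule sign_helper2)
    have "0 < (1 - e) * ((1 + e) * e)" using that by (intro mult_pos_pos) auto
    then show "0 < ((1 - e) - 0) * ((1 - e) - 0 - 2) * ((1 - e) - 0 - 1) - 0 * 0 * ((1 - e) - 0 - 3)"
      by (simp add: algebra_simps)
    have "0 < (1 + e) * ((1 - e) * e)" using that by (intro mult_pos_pos) auto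
    then show "((1 + e) - 0) * ((1 + e) - 0 - 2) * ((1 + e) - 0 - 1) - 0 * 0 * ((1 + e) - 0 - 3) < 0"
      by (simp add: algebra_simps)
  qed
  have S3: "((2 * (1 - e) - 0) * (2 * (1 - e) - 0 - 2) * (2 * (1 - e) - 0 - 1) - 0 * 0 * (2 * (1 - e) - 0 - 3)) *
            ((2 * (1 + e) - 0) * (2 * (1 + e) - 0 - 2) * (2 * (1 + e) - 0 - 1) - 0 * 0 * (2 * (1 + e) - 0 - 3)) < 0"
    if "0 < e" "e \<le> 1/4" for e :: real
  proof (rule sign_helper)
    have "0 < (2 * (1 - e)) * ((2 * e) * (1 - 2 * e))" using that by (intro mult_pos_pos) auto
    then show "(2 * (1 - e) - 0) * (2 * (1 - e) - 0 - 2) * (2 * (1 - e) - 0 - 1) - 0 * 0 * (2 * (1 - e) - 0 - 3) < 0"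
      by (simp add: algebra_simps)
    have "0 < (2 * (1 + e)) * ((2 * e) * (1 + 2 * e))" using that by (intro mult_pos_pos) auto
    then show "0 < (2 * (1 + e) - 0) * (2 * (1 + e) - 0 - 2) * (2 * (1 + e) - 0 - 1) - 0 * 0 * (2 * (1 + e) - 0 - 3)"
      by (simp add: algebra_simps)
  qed
  have sep: "eventually (\<lambda>n. 0 < a n \<and> 2 * a n \<le> g n \<and> 2 * g n \<le> 2 * g n) sequentially"
  proof -
    have "eventually (\<lambda>n. U n < 1/2) sequentially" using U0 by (rule order_tendstoD) simp
    then show ?thesis
    proof eventually_elim
      case (elim n)
      then show ?case using apos[of n] gpos[of n] by (simp add: U_def field_simps)
    qed
  qed
  obtain r1 r2 r3 where R: "eventually (\<lambda>n. r1 n \<noteq> r2 n \<and> r1 n \<noteq> r3 n \<and> r2 n \<noteq> r3 n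
      \<and> pc (a n) (b n) (g n) (r1 n) = 0 \<and> pc (a n) (b n) (g n) (r2 n) = 0 \<and> pc (a n) (b n) (g n) (r3 n) = 0
      \<and> 0 < r1 n \<and> 0 < r2 n \<and> 0 < r3 n) sequentially"
    and c1: "(\<lambda>n. r1 n / a n) \<longlonglongrightarrow> 1" and c2: "(\<lambda>n. r2 n / g n) \<longlonglongrightarrow> 1"
    and c3: "(\<lambda>n. r3 n / (2 * g n)) \<longlonglongrightarrow> 1"
    using canon_roots[OF sep, of a b g]
      root_near[OF L1 k1 sp1 _ S1] root_near[OF L2 k3 sp2 _ S2] root_near[OF L3 k3 sp3 _ S3]
    by blast
  have d2: "filterlim (\<lambda>n. r2 n / a n) at_top sequentially"
  proof -
    have gi: "filterlim (\<lambda>n. inverse (U n)) at_top sequentially"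
      by (rule filterlim_inverse_at_top[OF U0]) (intro always_eventually allI, simp add: U_def apos gpos)
    have "filterlim (\<lambda>n. (r2 n / g n) * inverse (U n)) at_top sequentially"
      by (intro filterlim_tendsto_pos_mult_at_top[OF c2 _ gi]) simp
    moreover have "(\<lambda>n. (r2 n / g n) * inverse (U n)) = (\<lambda>n. r2 n / a n)"
    proof
      fix n show "(r2 n / g n) * inverse (U n) = r2 n / a n"
        using apos[of n] gpos[of n] by (simp add: U_def field_simps)
    qed
    ultimately show ?thesis by simp
  qed
  have d3: "eventually (\<lambda>n. 3/2 * (r2 n / a n) \<le> r3 n / a n) sequentially"
  proof -
    have "eventually (\<lambda>n. r2 n / g n < 11/10) sequentially" using c2 by (rule order_tendstoD) simp
    moreover have "eventually (\<lambda>n. 9/10 < r3 n / (2 * g n)) sequentially" using c3 by (rule order_tendstoD) simp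
    ultimately show ?thesis
    proof eventually_elim
      case (elim n)
      then have "3/2 * r2 n \<le> r3 n" using gpos[of n] by (simp add: field_simps)
      then show ?case using apos[of n] by (simp add: field_simps)
    qed
  qed
  show ?thesis using R c1 d2 d3 unfolding a_def b_def g_def by blast
qed

definition Hx :: "real \<Rightarrow> real \<Rightarrow> real \<Rightarrow> real \<Rightarrow> real" where
  "Hx r1 r2 r3 t = coef r1 r2 r3 * exp (- r1 * t) + coef r2 r1 r3 * exp (- r2 * t) + coef r3 r1 r2 * exp (- r3 * t)"

lemma coef_split: "coef r s u = (s / (s - r)) * (u / (u - r))"
  unfolding coef_def by simp

lemma ratio_to_0:
  fixes f h :: "nat \<Rightarrow> real"
  assumes f: "(f \<longlongrightarrow> L) sequentially" and h: "filterlim h at_top sequentially"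
  shows "((\<lambda>n. f n / (f n - h n)) \<longlongrightarrow> 0) sequentially"
    and "((\<lambda>n. h n / (h n - f n)) \<longlongrightarrow> 1) sequentially"
proof -
  have q: "((\<lambda>n. f n * inverse (h n)) \<longlongrightarrow> L * 0) sequentially"
    by (intro tendsto_mult f tendsto_inverse_0_at_top h)
  have evp: "eventually (\<lambda>n. h n > 0) sequentially"
    using h by (simp add: filterlim_at_top_dense)
  have "((\<lambda>n. (f n * inverse (h n)) / (f n * inverse (h n) - 1)) \<longlongrightarrow> (L * 0) / (L * 0 - 1)) sequentially"
    by (intro tendsto_intros q) simp
  moreover have "eventually (\<lambda>n. (f n * inverse (h n)) / (f n * inverse (h n) - 1) = f n / (f n - h n)) sequentially"
    using evp by eventually_elim (simp add: field_simps)
  ultimately show "((\<lambda>n. f n / (f n - h n)) \<longlongrightarrow> 0) sequentially"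
    by (simp add: tendsto_cong)
  have "((\<lambda>n. 1 / (1 - f n * inverse (h n))) \<longlongrightarrow> 1 / (1 - L * 0)) sequentially"
    by (intro tendsto_intros q) simp
  moreover have "eventually (\<lambda>n. 1 / (1 - f n * inverse (h n)) = h n / (h n - f n)) sequentially"
    using evp by eventually_elim (simp add: field_simps)
  ultimately show "((\<lambda>n. h n / (h n - f n)) \<longlongrightarrow> 1) sequentially"
    by (simp add: tendsto_cong)
qed

lemma exp_le1: "0 \<le> r \<Longrightarrow> 0 \<le> t \<Longrightarrow> exp (- r * t) \<le> (1::real)"
  by simp

lemma LIM_A:
  fixes p1 p2 p3 :: "nat \<Rightarrow> real"
  assumes p1: "p1 \<longlonglongrightarrow> 1" and p2: "filterlim p2 at_top sequentially"
    and p3: "eventually (\<lambda>n. 3/2 * p2 n \<le> p3 n) sequentially" and t: "0 \<le> t"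
  shows "(\<lambda>n. Hx (p1 n) (p2 n) (p3 n) t) \<longlonglongrightarrow> exp (- t)"
proof -
  have p3l: "filterlim p3 at_top sequentially"
  proof (rule filterlim_at_top_mono[OF _ p3])
    show "filterlim (\<lambda>n. 3/2 * p2 n) at_top sequentially"
      by (intro filterlim_tendsto_pos_mult_at_top[OF tendsto_const _ p2]) simp
  qed
  have ev2: "eventually (\<lambda>n. p2 n > 0) sequentially" using p2 by (simp add: filterlim_at_top_dense)
  have T1: "(\<lambda>n. exp (- p1 n * t) * ((p2 n / (p2 n - p1 n)) * (p3 n / (p3 n - p1 n)))) \<longlonglongrightarrow> exp (- 1 * t) * (1 * 1)"
    by (intro tendsto_intros p1 ratio_to_0(2)[OF p1 p2] ratio_to_0(2)[OF p1 p3l])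
  have T2: "(\<lambda>n. coef (p2 n) (p1 n) (p3 n) * exp (- p2 n * t)) \<longlonglongrightarrow> 0"
  proof (rule Lim_null_comparison)
    show "eventually (\<lambda>n. norm (coef (p2 n) (p1 n) (p3 n) * exp (- p2 n * t)) \<le> 3 * \<bar>p1 n / (p1 n - p2 n)\<bar>) sequentially"
      using p3 ev2
    proof eventually_elim
      case (elim n)
      have b: "\<bar>p3 n / (p3 n - p2 n)\<bar> \<le> 3" using elim by (simp add: abs_le_iff field_simps)
      have e: "\<bar>exp (- p2 n * t)\<bar> \<le> 1" using elim t by simp
      have "norm (coef (p2 n) (p1 n) (p3 n) * exp (- p2 n * t)) =
          \<bar>p1 n / (p1 n - p2 n)\<bar> * \<bar>p3 n / (p3 n - p2 n)\<bar> * \<bar>exp (- p2 n * t)\<bar>"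
        unfolding coef_split by (simp add: abs_mult)
      also have "\<dots> \<le> \<bar>p1 n / (p1 n - p2 n)\<bar> * 3 * 1"
        using b e by (intro mult_mono) auto
      finally show ?case by (simp add: mult.commute)
    qed
    show "(\<lambda>n. 3 * \<bar>p1 n / (p1 n - p2 n)\<bar>) \<longlonglongrightarrow> 0"
      using tendsto_mult[OF tendsto_const tendsto_rabs[OF ratio_to_0(1)[OF p1 p2]], of 3] by simp
  qed
  have T3: "(\<lambda>n. coef (p3 n) (p1 n) (p2 n) * exp (- p3 n * t)) \<longlonglongrightarrow> 0"
  proof (rule Lim_null_comparison)
    show "eventually (\<lambda>n. norm (coef (p3 n) (p1 n) (p2 n) * exp (- p3 n * t)) \<le> 2 * \<bar>p1 n / (p1 n - p3 n)\<bar>) sequentially"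
      using p3 ev2
    proof eventually_elim
      case (elim n)
      have b: "\<bar>p2 n / (p2 n - p3 n)\<bar> \<le> 2" using elim by (simp add: abs_le_iff field_simps)
      have e: "\<bar>exp (- p3 n * t)\<bar> \<le> 1" using elim t by simp
      have "norm (coef (p3 n) (p1 n) (p2 n) * exp (- p3 n * t)) =
          \<bar>p1 n / (p1 n - p3 n)\<bar> * \<bar>p2 n / (p2 n - p3 n)\<bar> * \<bar>exp (- p3 n * t)\<bar>"
        unfolding coef_split by (simp add: abs_mult)
      also have "\<dots> \<le> \<bar>p1 n / (p1 n - p3 n)\<bar> * 2 * 1"
        using b e by (intro mult_mono) auto
      finally show ?case by (simp add: mult.commute)
    qed
    show "(\<lambda>n. 2 * \<bar>p1 n / (p1 n - p3 n)\<bar>) \<longlonglongrightarrow> 0"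
      using tendsto_mult[OF tendsto_const tendsto_rabs[OF ratio_to_0(1)[OF p1 p3l]], of 2] by simp
  qed
  have "(\<lambda>n. exp (- p1 n * t) * ((p2 n / (p2 n - p1 n)) * (p3 n / (p3 n - p1 n)))
      + coef (p2 n) (p1 n) (p3 n) * exp (- p2 n * t) + coef (p3 n) (p1 n) (p2 n) * exp (- p3 n * t))
      \<longlonglongrightarrow> exp (- 1 * t) * (1 * 1) + 0 + 0"
    by (intro tendsto_add T1 T2 T3)
  then show ?thesis unfolding Hx_def coef_split by (simp add: mult.commute)
qed

lemma LIM_B:
  fixes p1 p2 p3 :: "nat \<Rightarrow> real"
  assumes p1: "p1 \<longlonglongrightarrow> 1" and p2: "p2 \<longlonglongrightarrow> 2"
    and p3: "filterlim p3 at_top sequentially" and t: "0 \<le> t"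
  shows "(\<lambda>n. Hx (p1 n) (p2 n) (p3 n) t) \<longlonglongrightarrow> 2 * exp (- t) - exp (- 2 * t)"
proof -
  have ev3: "eventually (\<lambda>n. p3 n > 0) sequentially" using p3 by (simp add: filterlim_at_top_dense)
  have T1: "(\<lambda>n. exp (- p1 n * t) * ((p2 n / (p2 n - p1 n)) * (p3 n / (p3 n - p1 n)))) \<longlonglongrightarrow> exp (- 1 * t) * ((2 / (2 - 1)) * 1)"
    by (intro tendsto_intros p1 p2 ratio_to_0(2)[OF p1 p3]) simp
  have T2: "(\<lambda>n. exp (- p2 n * t) * ((p1 n / (p1 n - p2 n)) * (p3 n / (p3 n - p2 n)))) \<longlonglongrightarrow> exp (- 2 * t) * ((1 / (1 - 2)) * 1)"
    by (intro tendsto_intros p1 p2 ratio_to_0(2)[OF p2 p3]) simp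
  have T3: "(\<lambda>n. coef (p3 n) (p1 n) (p2 n) * exp (- p3 n * t)) \<longlonglongrightarrow> 0"
  proof (rule Lim_null_comparison)
    show "eventually (\<lambda>n. norm (coef (p3 n) (p1 n) (p2 n) * exp (- p3 n * t)) \<le> \<bar>p1 n / (p1 n - p3 n)\<bar> * \<bar>p2 n / (p2 n - p3 n)\<bar>) sequentially"
      using ev3
    proof eventually_elim
      case (elim n)
      have e: "\<bar>exp (- p3 n * t)\<bar> \<le> 1" using elim t by simp
      have "norm (coef (p3 n) (p1 n) (p2 n) * exp (- p3 n * t)) =
          \<bar>p1 n / (p1 n - p3 n)\<bar> * \<bar>p2 n / (p2 n - p3 n)\<bar> * \<bar>exp (- p3 n * t)\<bar>"
        unfolding coef_split by (simp add: abs_mult)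
      also have "\<dots> \<le> \<bar>p1 n / (p1 n - p3 n)\<bar> * \<bar>p2 n / (p2 n - p3 n)\<bar> * 1"
        using e by (intro mult_left_mono) auto
      finally show ?case by simp
    qed
    show "(\<lambda>n. \<bar>p1 n / (p1 n - p3 n)\<bar> * \<bar>p2 n / (p2 n - p3 n)\<bar>) \<longlonglongrightarrow> 0"
      using tendsto_mult[OF tendsto_rabs[OF ratio_to_0(1)[OF p1 p3]] tendsto_rabs[OF ratio_to_0(1)[OF p2 p3]]] by simp
  qed
  have "(\<lambda>n. exp (- p1 n * t) * ((p2 n / (p2 n - p1 n)) * (p3 n / (p3 n - p1 n)))
      + exp (- p2 n * t) * ((p1 n / (p1 n - p2 n)) * (p3 n / (p3 n - p2 n)))
      + coef (p3 n) (p1 n) (p2 n) * exp (- p3 n * t))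
      \<longlonglongrightarrow> exp (- 1 * t) * ((2 / (2 - 1)) * 1) + exp (- 2 * t) * ((1 / (1 - 2)) * 1) + 0"
    by (intro tendsto_add T1 T2 T3)
  then show ?thesis unfolding Hx_def coef_split by (simp add: mult.commute)
qed

lemma Hx_scale:
  assumes "s \<noteq> 0" "r1 \<noteq> r2" "r1 \<noteq> r3" "r2 \<noteq> r3"
  shows "Hx (r1 / s) (r2 / s) (r3 / s) t = Hx r1 r2 r3 (t / s)"
proof -
  have c: "coef (x / s) (y / s) (z / s) = coef x y z" if "x \<noteq> y" "x \<noteq> z" for x y z
  proof -
    have "y - x \<noteq> 0" "z - x \<noteq> 0" using that by auto
    then show ?thesis unfolding coef_def using assms(1) by (simp add: field_simps)
  qed
  have e: "exp (- (x / s) * t) = exp (- x * (t / s))" for x by simp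
  have c1: "coef (r1 / s) (r2 / s) (r3 / s) = coef r1 r2 r3" by (rule c) (use assms in auto)
  have c2: "coef (r2 / s) (r1 / s) (r3 / s) = coef r2 r1 r3" by (rule c) (use assms in auto)
  have c3: "coef (r3 / s) (r1 / s) (r2 / s) = coef r3 r1 r2" by (rule c) (use assms in auto)
  show ?thesis unfolding Hx_def e c1 c2 c3 by simp
qed

lemma final_conv:
  fixes lam gam s r1 r2 r3 :: "nat \<Rightarrow> real" and v0 :: "nat \<Rightarrow> nat" and G Hl :: "real \<Rightarrow> real"
  assumes lam_pos: "\<And>n. lam n > 0" and gam_pos: "\<And>n. gam n > 0"
    and start: "\<And>n. n > 0 \<Longrightarrow> v0 n < n"
    and R: "eventually (\<lambda>n. r1 n \<noteq> r2 n \<and> r1 n \<noteq> r3 n \<and> r2 n \<noteq> r3 n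
      \<and> pc (2 * lam n) (2 * lam n / real (n - 1)) (gam n) (r1 n) = 0
      \<and> pc (2 * lam n) (2 * lam n / real (n - 1)) (gam n) (r2 n) = 0
      \<and> pc (2 * lam n) (2 * lam n / real (n - 1)) (gam n) (r3 n) = 0
      \<and> 0 < r1 n \<and> 0 < r2 n \<and> 0 < r3 n) sequentially"
    and spos: "eventually (\<lambda>n. 0 < s n) sequentially"
    and lim: "\<And>t. 0 \<le> t \<Longrightarrow> (\<lambda>n. Hx (r1 n / s n) (r2 n / s n) (r3 n / s n) t) \<longlonglongrightarrow> Hl t"
    and G: "\<And>t. G t = (if t < 0 then 0 else 1 - Hl t)"
  shows "weak_conv (\<lambda>n t. end_time_cdf {..<n} (Kn_nbr n) (lam n) (gam n) (v0 n, v0 n, True, True) (t / s n)) G"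
  unfolding weak_conv_def
proof (intro allI impI)
  fix t :: real
  show "(\<lambda>n. end_time_cdf {..<n} (Kn_nbr n) (lam n) (gam n) (v0 n, v0 n, True, True) (t / s n)) \<longlonglongrightarrow> G t"
  proof (cases "t < 0")
    case True
    have "eventually (\<lambda>n. end_time_cdf {..<n} (Kn_nbr n) (lam n) (gam n) (v0 n, v0 n, True, True) (t / s n) = 0) sequentially"
      using spos
    proof eventually_elim
      case (elim n)
      then have "t / s n < 0" using True by (simp add: divide_neg_pos)
      then show ?case by (simp add: end_time_cdf_def)
    qed
    then show ?thesis using True G[of t] by (simp add: tendsto_cong)
  next
    case False
    have "eventually (\<lambda>n. 1 - Hx (r1 n / s n) (r2 n / s n) (r3 n / s n) t =
        end_time_cdf {..<n} (Kn_nbr n) (lam n) (gam n) (v0 n, v0 n, True, True) (t / s n)) sequentially"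
      using R spos eventually_ge_at_top[of 2]
    proof eventually_elim
      case (elim n)
      have ts: "0 \<le> t / s n" using False elim by simp
      have "end_time_cdf {..<n} (Kn_nbr n) (lam n) (gam n) (v0 n, v0 n, True, True) (t / s n) = 1 - Hx (r1 n) (r2 n) (r3 n) (t / s n)"
        unfolding Hx_def using elim start[of n] lam_pos[of n] gam_pos[of n]
        by (intro cdf_closed ts) auto
      also have "Hx (r1 n) (r2 n) (r3 n) (t / s n) = Hx (r1 n / s n) (r2 n / s n) (r3 n / s n) t"
        using elim by (intro Hx_scale[symmetric]) auto
      finally show ?case by simp
    qed
    moreover have "(\<lambda>n. 1 - Hx (r1 n / s n) (r2 n / s n) (r3 n / s n) t) \<longlonglongrightarrow> 1 - Hl t"
      using False by (intro tendsto_intros lim) simp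
    ultimately show ?thesis using False G[of t] by (simp add: tendsto_cong)
  qed
qed

theorem mainTheorem5:
  fixes lam gam :: "nat \<Rightarrow> real" and v0 :: "nat \<Rightarrow> nat"
  defines "F \<equiv> (\<lambda>n. end_time_cdf {..<n} (Kn_nbr n) (lam n) (gam n) (v0 n, v0 n, True, True))"
  assumes lam_pos: "\<And>n. lam n > 0"
      and gam_pos: "\<And>n. gam n > 0"
      and lam_lim: "filterlim lam at_top sequentially"
      and gam_lim: "filterlim gam at_top sequentially"
      and start: "\<And>n. n > 0 \<Longrightarrow> v0 n < n"
  shows "(filterlim (\<lambda>n. lam n / (real n * gam n)) at_top sequentially \<longrightarrow>
            weak_conv (\<lambda>n t. F n (t / (real n * (gam n)\<^sup>2 / lam n)))
                      (cdf (density lborel (exponential_density 1))))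
       \<and> (((\<lambda>n. lam n / gam n) \<longlonglongrightarrow> 0) \<longrightarrow>
            weak_conv (\<lambda>n t. F n (t / (2 * lam n)))
                      (cdf (density lborel (exponential_density 1))))
       \<and> ((filterlim (\<lambda>n. lam n / gam n) at_top sequentially \<and>
             ((\<lambda>n. lam n / (real n * gam n)) \<longlonglongrightarrow> 0)) \<longrightarrow>
            weak_conv (\<lambda>n t. F n (t / gam n))
                      (cdf (density lborel (exponential_density 1) \<star>
                            density lborel (exponential_density 2))))"
proof (intro conjI impI)
  assume h: "filterlim (\<lambda>n. lam n / (real n * gam n)) at_top sequentially"
  obtain r1 r2 r3 where R: "eventually (\<lambda>n. r1 n \<noteq> r2 n \<and> r1 n \<noteq> r3 n \<and> r2 n \<noteq> r3 n
      \<and> pc (2 * lam n) (2 * lam n / real (n - 1)) (gam n) (r1 n) = 0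
      \<and> pc (2 * lam n) (2 * lam n / real (n - 1)) (gam n) (r2 n) = 0
      \<and> pc (2 * lam n) (2 * lam n / real (n - 1)) (gam n) (r3 n) = 0
      \<and> 0 < r1 n \<and> 0 < r2 n \<and> 0 < r3 n) sequentially"
    and c1: "(\<lambda>n. r1 n / (real n * (gam n)\<^sup>2 / lam n)) \<longlonglongrightarrow> 1"
    and c2: "filterlim (\<lambda>n. r2 n / (real n * (gam n)\<^sup>2 / lam n)) at_top sequentially"
    and c3: "eventually (\<lambda>n. 3/2 * (r2 n / (real n * (gam n)\<^sup>2 / lam n)) \<le> r3 n / (real n * (gam n)\<^sup>2 / lam n)) sequentially"
    using regime_i[OF lam_pos gam_pos h] by blast
  have sp: "eventually (\<lambda>n. 0 < real n * (gam n)\<^sup>2 / lam n) sequentially"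
    using eventually_ge_at_top[of 1]
  proof eventually_elim
    case (elim n)
    have "0 < (gam n)\<^sup>2" using gam_pos[of n] by simp
    then show ?case using elim lam_pos[of n] by (intro divide_pos_pos mult_pos_pos) auto
  qed
  show "weak_conv (\<lambda>n t. F n (t / (real n * (gam n)\<^sup>2 / lam n))) (cdf (density lborel (exponential_density 1)))"
    unfolding F_def
  proof (rule final_conv[OF lam_pos gam_pos start R sp, where Hl = "\<lambda>t. exp (- t)"])
    fix t :: real assume "0 \<le> t"
    then show "(\<lambda>n. Hx (r1 n / (real n * (gam n)\<^sup>2 / lam n)) (r2 n / (real n * (gam n)\<^sup>2 / lam n)) (r3 n / (real n * (gam n)\<^sup>2 / lam n)) t) \<longlonglongrightarrow> exp (- t)" by (rule LIM_A[OF c1 c2 c3])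
  next
    fix t :: real show "cdf (density lborel (exponential_density 1)) t = (if t < 0 then 0 else 1 - exp (- t))"
      by (rule cdf_exp1)
  qed
next
  assume h: "(\<lambda>n. lam n / gam n) \<longlonglongrightarrow> 0"
  obtain r1 r2 r3 where R: "eventually (\<lambda>n. r1 n \<noteq> r2 n \<and> r1 n \<noteq> r3 n \<and> r2 n \<noteq> r3 n
      \<and> pc (2 * lam n) (2 * lam n / real (n - 1)) (gam n) (r1 n) = 0
      \<and> pc (2 * lam n) (2 * lam n / real (n - 1)) (gam n) (r2 n) = 0
      \<and> pc (2 * lam n) (2 * lam n / real (n - 1)) (gam n) (r3 n) = 0
      \<and> 0 < r1 n \<and> 0 < r2 n \<and> 0 < r3 n) sequentially"
    and c1: "(\<lambda>n. r1 n / (2 * lam n)) \<longlonglongrightarrow> 1"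
    and c2: "filterlim (\<lambda>n. r2 n / (2 * lam n)) at_top sequentially"
    and c3: "eventually (\<lambda>n. 3/2 * (r2 n / (2 * lam n)) \<le> r3 n / (2 * lam n)) sequentially"
    using regime_ii[OF lam_pos gam_pos h] by blast
  have sp: "eventually (\<lambda>n. 0 < 2 * lam n) sequentially"
    by (intro always_eventually allI) (simp add: lam_pos)
  show "weak_conv (\<lambda>n t. F n (t / (2 * lam n))) (cdf (density lborel (exponential_density 1)))"
    unfolding F_def
  proof (rule final_conv[OF lam_pos gam_pos start R sp, where Hl = "\<lambda>t. exp (- t)"])
    fix t :: real assume "0 \<le> t"
    then show "(\<lambda>n. Hx (r1 n / (2 * lam n)) (r2 n / (2 * lam n)) (r3 n / (2 * lam n)) t) \<longlonglongrightarrow> exp (- t)" by (rule LIM_A[OF c1 c2 c3])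
  next
    fix t :: real show "cdf (density lborel (exponential_density 1)) t = (if t < 0 then 0 else 1 - exp (- t))"
      by (rule cdf_exp1)
  qed
next
  assume h: "filterlim (\<lambda>n. lam n / gam n) at_top sequentially \<and> (\<lambda>n. lam n / (real n * gam n)) \<longlonglongrightarrow> 0"
  obtain r1 r2 r3 where R: "eventually (\<lambda>n. r1 n \<noteq> r2 n \<and> r1 n \<noteq> r3 n \<and> r2 n \<noteq> r3 n
      \<and> pc (2 * lam n) (2 * lam n / real (n - 1)) (gam n) (r1 n) = 0
      \<and> pc (2 * lam n) (2 * lam n / real (n - 1)) (gam n) (r2 n) = 0
      \<and> pc (2 * lam n) (2 * lam n / real (n - 1)) (gam n) (r3 n) = 0
      \<and> 0 < r1 n \<and> 0 < r2 n \<and> 0 < r3 n) sequentially"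
    and c1: "(\<lambda>n. r1 n / gam n) \<longlonglongrightarrow> 1" and c2: "(\<lambda>n. r2 n / gam n) \<longlonglongrightarrow> 2"
    and c3: "filterlim (\<lambda>n. r3 n / gam n) at_top sequentially"
    using regime_iii[of lam gam, OF lam_pos gam_pos conjunct1[OF h] conjunct2[OF h]] by blast
  have sp: "eventually (\<lambda>n. 0 < gam n) sequentially"
    by (intro always_eventually allI) (simp add: gam_pos)
  show "weak_conv (\<lambda>n t. F n (t / gam n))
       (cdf (density lborel (exponential_density 1) \<star> density lborel (exponential_density 2)))"
    unfolding F_def
  proof (rule final_conv[OF lam_pos gam_pos start R sp, where Hl = "\<lambda>t. 2 * exp (- t) - exp (- 2 * t)"])
    fix t :: real assume "0 \<le> t"
    then show "(\<lambda>n. Hx (r1 n / gam n) (r2 n / gam n) (r3 n / gam n) t) \<longlonglongrightarrow> 2 * exp (- t) - exp (- 2 * t)" by (rule LIM_B[OF c1 c2 c3])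
  next
    fix t :: real show "cdf (density lborel (exponential_density 1) \<star> density lborel (exponential_density 2)) t
        = (if t < 0 then 0 else 1 - (2 * exp (- t) - exp (- 2 * t)))"
      by (simp add: cdf_conv12)
  qed
qed

end
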